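(* Assume the standing assumptions. Let $\bar u$ be a local solution of (P) with radius $\rho>0$, let $\epsilon_k>0$ with $\epsilon_k\to0$, and let $u_k$ be a global solution of the auxiliary problem $\min\{\Phi_{\epsilon_k}(u)+\frac12\|u-\bar u\|_{L^2(\Omega)}^2:\ u\in V,\ \|u-\bar u\|_V\le\rho\}$. Define $\lambda_k\in V^*$ by $\langle\lambda_k,v\rangle_{V^*,V}:=G_{\epsilon_k}'(u_k)v=\int_\Omega 2u_k\,\psi_{\epsilon_k}'(u_k^2)\,v\,dx$. Then $\lambda_k\to\bar\lambda$ in $V^*$, where $\bar\lambda\in V^*$ is defined by \[ \beta\langle\bar\lambda,v\rangle_{V^*,V}=-F'(\bar u)v-\alpha\langle\bar u,v\rangle_V\qquad\forall v\in V. \]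
   Context: Standing assumptions: $\Omega\subset\mathbb R^d$ bounded Lipschitz domain; $V$ real Hilbert space with inner product $\langle\cdot,\cdot\rangle_V$, $V\subset L^2(\Omega)$ with compact and dense embedding; $V^*$ dual with pairing $\langle\cdot,\cdot\rangle_{V^*,V}$. $F:V\to\mathbb R$ weakly lower semicontinuous, bounded below by an affine function, continuously Fréchet differentiable. $\alpha>0$, $\beta>0$, $p\in(0,1)$. For $\epsilon>0$, $\psi_\epsilon(t)=\frac p2\frac{t}{\epsilon^{2-p}}+(1-\frac p2)\epsilon^p$ if $t\in[0,\epsilon^2)$ and $\psi_\epsilon(t)=t^{p/2}$ if $t\ge\epsilon^2$, with $\psi_\epsilon'(t)=\frac p2\min(\epsilon^{p-2},t^{(p-2)/2})$; $\psi_0(t)=t^{p/2}$. $G_\epsilon(u):=\int_\Omega\psi_\epsilon(|u|^2)\,dx$, $\Phi_\epsilon(u):=F(u)+\frac\alpha2\|u\|_V^2+\beta G_\epsilon(u)$ for $\epsilon\ge0$. (P) is $\min_{u\in V}\Phi_0(u)$; $\bar u$ is a local solution with radius $\rho$ if $\Phi_0(\bar u)\le\Phi_0(u)$ whenever $\|u-\bar u\|_V\le\rho$. *)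

theory Defs
  imports "HOL-Analysis.Analysis"
begin

text \<open>Strong Lipschitz boundary: near every boundary point the domain is, after a
 rigid choice of a unit direction e, the subgraph of a Lipschitz function of the
 component orthogonal to e.\<close>

definition lipschitz_domain :: "'a::euclidean_space set \<Rightarrow> bool" where
  "lipschitz_domain \<Omega> \<longleftrightarrow> open \<Omega> \<and> connected \<Omega> \<and> \<Omega> \<noteq> {} \<and> bounded \<Omega> \<and>
     (\<forall>x \<in> frontier \<Omega>. \<exists>r>0. \<exists>e::'a. \<exists>g::'a \<Rightarrow> real. \<exists>L.
        norm e = 1 \<and> L-lipschitz_on {y. y \<bullet> e = 0} g \<and>
        \<Omega> \<inter> ball x r = {y \<in> ball x r. y \<bullet> e < g (y - (y \<bullet> e) *\<^sub>R e)})"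

definition L2 :: "'a::euclidean_space set \<Rightarrow> ('a \<Rightarrow> real) \<Rightarrow> bool" where
  "L2 \<Omega> f \<longleftrightarrow> f \<in> borel_measurable (lebesgue_on \<Omega>) \<and>
                integrable (lebesgue_on \<Omega>) (\<lambda>x. (f x)\<^sup>2)"

definition L2_norm :: "'a::euclidean_space set \<Rightarrow> ('a \<Rightarrow> real) \<Rightarrow> real" where
  "L2_norm \<Omega> f = sqrt (integral\<^sup>L (lebesgue_on \<Omega>) (\<lambda>x. (f x)\<^sup>2))"

text \<open>V is a real Hilbert space (type class), identified with a subspace of L^2(Omega)
 via the linear map emb; the embedding is continuous, injective (modulo null sets),
 compact and dense.\<close>

definition compact_dense_embedding ::
  "'a::euclidean_space set \<Rightarrow> ('v::{real_inner,complete_space} \<Rightarrow> 'a \<Rightarrow> real) \<Rightarrow> bool" where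
  "compact_dense_embedding \<Omega> emb \<longleftrightarrow>
     (\<forall>v. L2 \<Omega> (emb v)) \<and>
     (\<forall>a b u v. emb (a *\<^sub>R u + b *\<^sub>R v) = (\<lambda>x. a * emb u x + b * emb v x)) \<and>
     (\<exists>C. \<forall>v. L2_norm \<Omega> (emb v) \<le> C * norm v) \<and>
     (\<forall>v. (AE x in lebesgue_on \<Omega>. emb v x = 0) \<longrightarrow> v = 0) \<and>
     (\<forall>w::nat \<Rightarrow> 'v. bounded (range w) \<longrightarrow>
        (\<exists>r f. strict_mono r \<and> L2 \<Omega> f \<and>
           (\<lambda>n. L2_norm \<Omega> (\<lambda>x. emb (w (r n)) x - f x)) \<longlonglongrightarrow> 0)) \<and>
     (\<forall>f. L2 \<Omega> f \<longrightarrow> (\<forall>e>0. \<exists>v. L2_norm \<Omega> (\<lambda>x. emb v x - f x) < e))"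

definition weakly_lsc :: "('v::real_inner \<Rightarrow> real) \<Rightarrow> bool" where
  "weakly_lsc F \<longleftrightarrow>
     (\<forall>w u. (\<forall>z. (\<lambda>n. inner (w n) z) \<longlonglongrightarrow> inner u z) \<longrightarrow>
            ereal (F u) \<le> liminf (\<lambda>n. ereal (F (w n))))"

definition bounded_below_affine :: "('v::real_normed_vector \<Rightarrow> real) \<Rightarrow> bool" where
  "bounded_below_affine F \<longleftrightarrow> (\<exists>(l::'v \<Rightarrow>\<^sub>L real) c. \<forall>u. blinfun_apply l u + c \<le> F u)"

definition C1_frechet :: "('v::real_normed_vector \<Rightarrow> real) \<Rightarrow> ('v \<Rightarrow> ('v \<Rightarrow>\<^sub>L real)) \<Rightarrow> bool" where
  "C1_frechet F DF \<longleftrightarrow> (\<forall>u. (F has_derivative blinfun_apply (DF u)) (at u)) \<and> continuous_on UNIV DF"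

definition psi :: "real \<Rightarrow> real \<Rightarrow> real \<Rightarrow> real" where
  "psi p \<epsilon> t = (if t < \<epsilon>\<^sup>2 then p / 2 * t / \<epsilon> powr (2 - p) + (1 - p / 2) * \<epsilon> powr p
                 else t powr (p / 2))"

text \<open>Derivative of psi: p/2 * min(eps^(p-2), t^((p-2)/2)) (value eps^(p-2) at t = 0 for eps > 0).\<close>
definition psi' :: "real \<Rightarrow> real \<Rightarrow> real \<Rightarrow> real" where
  "psi' p \<epsilon> t = (if t < \<epsilon>\<^sup>2 then p / 2 * \<epsilon> powr (p - 2) else p / 2 * t powr ((p - 2) / 2))"

definition G :: "'a::euclidean_space set \<Rightarrow> ('v \<Rightarrow> 'a \<Rightarrow> real) \<Rightarrow> real \<Rightarrow> real \<Rightarrow> 'v \<Rightarrow> real" where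
  "G \<Omega> emb p \<epsilon> u = integral\<^sup>L (lebesgue_on \<Omega>) (\<lambda>x. psi p \<epsilon> ((emb u x)\<^sup>2))"

definition Phi ::
  "'a::euclidean_space set \<Rightarrow> ('v::real_inner \<Rightarrow> 'a \<Rightarrow> real) \<Rightarrow> ('v \<Rightarrow> real) \<Rightarrow> real \<Rightarrow> real \<Rightarrow> real
     \<Rightarrow> real \<Rightarrow> 'v \<Rightarrow> real" where
  "Phi \<Omega> emb F \<alpha> \<beta> p \<epsilon> u = F u + \<alpha> / 2 * (norm u)\<^sup>2 + \<beta> * G \<Omega> emb p \<epsilon> u"

end

theory Submission
  imports Defs
begin

lemma psi_lower:
  assumes p: "0 < p" "p < 1" and e: "0 < \<epsilon>" and t: "0 \<le> t"
  shows "t powr (p/2) \<le> psi p \<epsilon> t"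
proof (cases "t < \<epsilon>\<^sup>2")
  case False then show ?thesis by (simp add: psi_def)
next
  case True
  show ?thesis
  proof (cases "t = 0")
    case True then show ?thesis using p e by (simp add: psi_def)
  next
    case False
    hence tp: "t > 0" using t by simp
    define a where "a = t / \<epsilon> powr (2 - p)"
    define b where "b = \<epsilon> powr p"
    have "a powr (p/2) * b powr (1 - p/2) \<le> (p/2)*a + (1-p/2)*b"
      by (rule Youngs_inequality_0) (use p e tp in \<open>auto simp: a_def b_def\<close>)
    moreover have "a powr (p/2) * b powr (1 - p/2) = t powr (p/2)"
    proof -
      have 1: "a powr (p/2) = t powr (p/2) / \<epsilon> powr ((2-p)*(p/2))"
        unfolding a_def using e tp by (simp add: powr_divide powr_powr)
      have 2: "b powr (1 - p/2) = \<epsilon> powr ((2-p)*(p/2))"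
      proof -
        have "b powr (1 - p/2) = \<epsilon> powr (p*(1-p/2))" unfolding b_def by (simp add: powr_powr)
        moreover have "p*(1-p/2) = (2-p)*(p/2)" by (simp add: field_simps)
        ultimately show ?thesis by simp
      qed
      show ?thesis unfolding 1 2 using e by simp
    qed
    ultimately show ?thesis using True by (simp add: psi_def a_def b_def)
  qed
qed

lemma psi_upper:
  assumes p: "0 < p" "p < 1" and e: "0 < \<epsilon>" and t: "0 \<le> t"
  shows "psi p \<epsilon> t \<le> t powr (p/2) + (1 - p/2) * \<epsilon> powr p"
proof (cases "t < \<epsilon>\<^sup>2")
  case False then show ?thesis using p e by (simp add: psi_def)
next
  case True
  show ?thesis
  proof (cases "t = 0")
    case True then show ?thesis using p e by (simp add: psi_def)
  next
    case False
    hence tp: "t > 0" using t by simp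
    have "t / \<epsilon> powr (2 - p) = t powr (p/2) * (t / \<epsilon>\<^sup>2) powr (1 - p/2)"
    proof -
      have "(t / \<epsilon>\<^sup>2) powr (1 - p/2) = t powr (1-p/2) / \<epsilon> powr (2*(1-p/2))"
      proof -
        have "(t / \<epsilon>\<^sup>2) powr (1 - p/2) = t powr (1-p/2) / (\<epsilon> powr 2) powr (1-p/2)"
          using e tp by (simp add: powr_divide)
        also have "(\<epsilon> powr 2) powr (1-p/2) = \<epsilon> powr (2*(1-p/2))"
          by (simp add: powr_powr)
        finally show ?thesis .
      qed
      moreover have "t powr (p/2) * t powr (1-p/2) = t" using tp by (simp add: powr_add[symmetric])
      ultimately show ?thesis by (simp add: algebra_simps)
    qed
    moreover have "(t / \<epsilon>\<^sup>2) powr (1 - p/2) \<le> 1"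
      using True tp e p by (intro powr_le1) auto
    ultimately have "t / \<epsilon> powr (2 - p) \<le> t powr (p/2)"
      by (metis mult_left_le powr_ge_zero)
    moreover have "p/2 * (t / \<epsilon> powr (2 - p)) \<le> t / \<epsilon> powr (2 - p)"
      using p tp e by (intro mult_left_le_one_le) auto
    ultimately show ?thesis using True by (simp add: psi_def)
  qed
qed

lemma hrd_within: "(f has_real_derivative D) (at x) \<Longrightarrow> (f has_derivative (\<lambda>h. h * D)) (at x within s)"
proof -
  assume "(f has_real_derivative D) (at x)"
  then have "(f has_derivative (*) D) (at x)" by (simp add: has_field_derivative_def)
  moreover have "(\<lambda>h. h*D) = (*) D" by (rule ext) simp
  ultimately show ?thesis by (simp add: has_derivative_at_withinI)
qed

lemma psi_deriv:
  assumes e: "0 < \<epsilon>"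
  shows "(psi p \<epsilon> has_real_derivative psi' p \<epsilon> t) (at t)"
proof -
  define S where "S = {..<\<epsilon>\<^sup>2}"
  define T where "T = {\<epsilon>\<^sup>2..}"
  define L where "L = (\<lambda>t::real. p / 2 * t / \<epsilon> powr (2 - p) + (1 - p / 2) * \<epsilon> powr p)"
  define g where "g = (\<lambda>t::real. t powr (p/2))"
  have e2: "\<epsilon>\<^sup>2 > 0" using e by simp
  have cl: "closure S \<inter> closure T = {\<epsilon>\<^sup>2}" by (auto simp: S_def T_def)
  have psi_eq: "psi p \<epsilon> = (\<lambda>t. if t \<in> S then L t else g t)"
    by (auto simp: psi_def S_def L_def g_def fun_eq_iff)
  have epow: "\<epsilon> powr (p - 2) = 1 / \<epsilon> powr (2 - p)"
    using e by (simp add: powr_minus_divide[symmetric] )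
  have e2pow: "(\<epsilon>\<^sup>2) powr (p/2 - 1) = \<epsilon> powr (p - 2)"
  proof -
    have "(\<epsilon>\<^sup>2) powr (p/2 - 1) = (\<epsilon> powr 2) powr (p/2 - 1)" using e by (simp add: powr_realpow)
    also have "\<dots> = \<epsilon> powr (2*(p/2-1))" by (simp add: powr_powr)
    finally show ?thesis by (simp add: algebra_simps)
  qed
  have e2pow': "(\<epsilon>\<^sup>2) powr (p/2) = \<epsilon> powr p"
  proof -
    have "(\<epsilon>\<^sup>2) powr (p/2) = (\<epsilon> powr 2) powr (p/2)" using e by (simp add: powr_realpow)
    also have "\<dots> = \<epsilon> powr (2*(p/2))" by (simp add: powr_powr)
    finally show ?thesis by (simp add: algebra_simps)
  qed
  have Lval: "L (\<epsilon>\<^sup>2) = \<epsilon> powr p"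
  proof -
    have "\<epsilon>\<^sup>2 / \<epsilon> powr (2 - p) = \<epsilon> powr p"
      proof -
        have "\<epsilon> powr (2 - p) = \<epsilon>\<^sup>2 / \<epsilon> powr p" using e by (simp add: powr_diff powr_realpow)
        then show ?thesis using e by simp
      qed
    then have "p / 2 * \<epsilon>\<^sup>2 / \<epsilon> powr (2 - p) = p/2 * \<epsilon> powr p"
      by (metis times_divide_eq_right)
    then show ?thesis unfolding L_def by (simp add: algebra_simps)
  qed
  have "((\<lambda>t. if t \<in> S then L t else g t) has_derivative
      (if t \<in> S then (\<lambda>h. h * (p/2 / \<epsilon> powr (2 - p))) else (\<lambda>h. h * (p/2 * t powr (p/2 - 1))))) (at t within (S \<union> T))"
  proof (rule has_derivative_If_within_closures[where f'="\<lambda>_ h. h * (p/2 / \<epsilon> powr (2 - p))"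
        and g'="\<lambda>x h. h * (p/2 * x powr (p/2 - 1))"])
    show "(L has_derivative (\<lambda>h. h * (p/2 / \<epsilon> powr (2 - p)))) (at t within S \<union> (closure S \<inter> closure T))"
    proof -
      have "(L has_real_derivative (p/2/\<epsilon> powr (2-p))) (at t)"
      proof -
        have "L = (\<lambda>t. t * (p/2/\<epsilon> powr (2-p)) + (1 - p / 2) * \<epsilon> powr p)"
          unfolding L_def by (simp add: fun_eq_iff)
        moreover have "((\<lambda>t. t * (p/2/\<epsilon> powr (2-p)) + (1 - p / 2) * \<epsilon> powr p) has_real_derivative (p/2/\<epsilon> powr (2-p))) (at t)"
          using e by (auto intro!: derivative_eq_intros)
        ultimately show ?thesis by simp
      qed
      then show ?thesis by (rule hrd_within)
    qed
    assume "t \<in> T \<union> (closure S \<inter> closure T)"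
    then have "t \<ge> \<epsilon>\<^sup>2" using cl by (auto simp: T_def)
    then have tpos: "t > 0" using e2 by linarith
    have "(g has_real_derivative (p/2) * t powr (p/2 - 1)) (at t)"
      unfolding g_def by (rule has_real_derivative_powr[OF tpos])
    then show "(g has_derivative (\<lambda>h. h * (p/2 * t powr (p/2 - 1)))) (at t within T \<union> (closure S \<inter> closure T))"
      by (rule hrd_within)
  next
    assume "t \<in> closure S" "t \<in> closure T"
    then have "t = \<epsilon>\<^sup>2" using cl by auto
    then show "L t = g t" using Lval e2pow' by (simp add: g_def)
  next
    assume "t \<in> closure S" "t \<in> closure T"
    then have "t = \<epsilon>\<^sup>2" using cl by auto
    then show "(\<lambda>h. h * (p/2 / \<epsilon> powr (2 - p))) = (\<lambda>h. h * (p/2 * t powr (p/2 - 1)))"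
      using e2pow epow by simp
  next
    show "t \<in> S \<union> T" by (auto simp: S_def T_def)
  qed
  moreover have "S \<union> T = UNIV" by (auto simp: S_def T_def)
  ultimately have "(psi p \<epsilon> has_derivative
      (if t \<in> S then (\<lambda>h. h * (p/2 / \<epsilon> powr (2 - p))) else (\<lambda>h. h * (p/2 * t powr (p/2 - 1))))) (at t)"
    by (simp add: psi_eq)
  moreover have "(if t \<in> S then (\<lambda>h. h * (p/2 / \<epsilon> powr (2 - p))) else (\<lambda>h. h * (p/2 * t powr (p/2 - 1))))
     = (\<lambda>h. h * psi' p \<epsilon> t)"
    using epow by (auto simp: S_def psi'_def diff_divide_distrib)
  ultimately have "(psi p \<epsilon> has_derivative (\<lambda>h. h * psi' p \<epsilon> t)) (at t)" by simp
  moreover have "(\<lambda>h. h * psi' p \<epsilon> t) = (*) (psi' p \<epsilon> t)" by (rule ext) simp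
  ultimately show ?thesis by (simp add: has_field_derivative_def)
qed

lemma psi'_meas: "psi' p \<epsilon> \<in> borel_measurable borel"
  unfolding psi'_def by measurable

lemma psi_meas: "psi p \<epsilon> \<in> borel_measurable borel"
  unfolding psi_def by measurable

lemma h_deriv:
  assumes e: "0 < \<epsilon>"
  shows "((\<lambda>s. psi p \<epsilon> (s\<^sup>2)) has_real_derivative 2 * s * psi' p \<epsilon> (s\<^sup>2)) (at s)"
proof -
  have "((\<lambda>s. psi p \<epsilon> (s\<^sup>2)) has_real_derivative psi' p \<epsilon> (s\<^sup>2) * (2 * s)) (at s)"
    by (rule DERIV_chain2[OF psi_deriv[OF e]]) (auto intro!: derivative_eq_intros)
  then show ?thesis by (simp add: mult.commute mult.left_commute)
qed

lemma h_dbound: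
  assumes p: "0 < p" "p < 1" and e: "0 < \<epsilon>"
  shows "\<bar>2 * s * psi' p \<epsilon> (s\<^sup>2)\<bar> \<le> p * \<epsilon> powr (p - 1)"
proof (cases "s\<^sup>2 < \<epsilon>\<^sup>2")
  case True
  then have "\<bar>s\<bar>\<^sup>2 < \<epsilon>\<^sup>2" by simp
  then have "\<bar>s\<bar> < \<epsilon>" using e by (rule power2_less_imp_less[OF _ less_imp_le])
  then have "\<bar>2 * s * psi' p \<epsilon> (s\<^sup>2)\<bar> = p * (\<bar>s\<bar> * \<epsilon> powr (p - 2))"
    using True p by (simp add: psi'_def abs_mult)
  also have "\<dots> \<le> p * (\<epsilon> * \<epsilon> powr (p - 2))"
    using \<open>\<bar>s\<bar> < \<epsilon>\<close> p by (intro mult_right_mono mult_left_mono) auto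
  also have "\<epsilon> * \<epsilon> powr (p - 2) = \<epsilon> powr (p - 1)"
  proof -
    have a: "\<epsilon> * \<epsilon> powr (p-2) = \<epsilon> powr (1 + (p-2))" using e by (intro powr_mult_base) simp
    have b: "1 + (p-2) = p - 1" by simp
    show ?thesis using a b by (simp only:)
  qed
  finally show ?thesis .
next
  case False
  then have "\<epsilon>\<^sup>2 \<le> \<bar>s\<bar>\<^sup>2" by simp
  then have se: "\<bar>s\<bar> \<ge> \<epsilon>" by (rule power2_le_imp_le[OF _ abs_ge_zero])
  then have sp: "\<bar>s\<bar> > 0" using e by linarith
  have "(s\<^sup>2) powr ((p - 2) / 2) = \<bar>s\<bar> powr (p - 2)"
  proof -
    have e1: "(s\<^sup>2) = \<bar>s\<bar> powr 2" using sp by (simp add: powr_realpow)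
    have "2 * ((p-2)/2) = p - 2" by simp
    then show ?thesis unfolding e1 by (simp only: powr_powr)
  qed
  then have "\<bar>2 * s * psi' p \<epsilon> (s\<^sup>2)\<bar> = p * (\<bar>s\<bar> * \<bar>s\<bar> powr (p - 2))"
    using False p by (simp add: psi'_def abs_mult)
  also have "\<bar>s\<bar> * \<bar>s\<bar> powr (p - 2) = \<bar>s\<bar> powr (p - 1)"
  proof -
    have a: "\<bar>s\<bar> * \<bar>s\<bar> powr (p-2) = \<bar>s\<bar> powr (1 + (p-2))" by (intro powr_mult_base) simp
    have b: "1 + (p-2) = p - 1" by simp
    show ?thesis using a b by (simp only:)
  qed
  also have "\<bar>s\<bar> powr (p - 1) \<le> \<epsilon> powr (p - 1)"
    using se e p by (intro powr_mono2') auto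
  finally show ?thesis using p by simp
qed

lemma h_lip:
  assumes p: "0 < p" "p < 1" and e: "0 < \<epsilon>"
  shows "\<bar>psi p \<epsilon> (a\<^sup>2) - psi p \<epsilon> (b\<^sup>2)\<bar> \<le> p * \<epsilon> powr (p - 1) * \<bar>a - b\<bar>"
proof -
  have gen: "\<bar>psi p \<epsilon> (y\<^sup>2) - psi p \<epsilon> (x\<^sup>2)\<bar> \<le> p * \<epsilon> powr (p - 1) * \<bar>y - x\<bar>" if xy: "x < y" for x y
  proof -
    have cont: "continuous_on {x..y} (\<lambda>s. psi p \<epsilon> (s\<^sup>2))"
      using h_deriv[OF e] by (meson DERIV_isCont continuous_at_imp_continuous_on)
    have dif: "(\<lambda>s. psi p \<epsilon> (s\<^sup>2)) differentiable (at s)" for s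
      using h_deriv[OF e] real_differentiable_def by blast
    obtain l z where z: "x < z" "z < y" "DERIV (\<lambda>s. psi p \<epsilon> (s\<^sup>2)) z :> l"
      "psi p \<epsilon> (y\<^sup>2) - psi p \<epsilon> (x\<^sup>2) = (y - x) * l"
      using MVT[OF xy cont dif] by blast
    have "l = 2 * z * psi' p \<epsilon> (z\<^sup>2)" using DERIV_unique[OF z(3) h_deriv[OF e]] .
    then have "\<bar>l\<bar> \<le> p * \<epsilon> powr (p - 1)" using h_dbound[OF p e] by simp
    then show ?thesis using z(4) xy by (simp add: abs_mult mult.commute mult_right_mono)
  qed
  consider "a < b" | "a = b" | "b < a" by linarith
  then show ?thesis
  proof cases
    case 1 then show ?thesis using gen[OF 1] by (simp add: abs_minus_commute)
  next
    case 3 then show ?thesis using gen[OF 3] by simp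
  qed simp
qed

lemma parallelogram_norm:
  fixes x y :: "'v::real_inner"
  shows "(norm (x - y))\<^sup>2 + (norm (x + y))\<^sup>2 = 2 * (norm x)\<^sup>2 + 2 * (norm y)\<^sup>2"
  by (simp add: power2_norm_eq_inner inner_add_left inner_add_right inner_diff_left inner_diff_right inner_commute)

lemma hilbert_nested_cauchy:
  fixes C :: "nat \<Rightarrow> 'v::{real_inner,complete_space} set"
  assumes ne: "\<And>n. C n \<noteq> {}"
    and nest: "\<And>n m. n \<le> m \<Longrightarrow> C m \<subseteq> C n"
    and mid: "\<And>n a b. a \<in> C n \<Longrightarrow> b \<in> C n \<Longrightarrow> (1/2) *\<^sub>R (a + b) \<in> C n"
    and bd: "\<And>n w. w \<in> C n \<Longrightarrow> norm w \<le> R"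
  shows "\<exists>w m. (\<forall>n. w n \<in> C n) \<and> w \<longlonglongrightarrow> m"
proof -
  define a where "a n = Inf (norm ` C n)" for n
  have bb: "bdd_below (norm ` C n)" for n by (rule bdd_belowI[of _ 0]) auto
  have a_low: "a n \<le> norm w" if "w \<in> C n" for n w
    unfolding a_def using that bb by (intro cInf_lower) auto
  have a_nn: "0 \<le> a n" for n
    unfolding a_def using ne by (intro cInf_greatest) auto
  have a_mono: "a n \<le> a m" if "n \<le> m" for n m
    unfolding a_def using ne nest[OF that] bb by (intro cInf_superset_mono) auto
  have a_R: "a n \<le> R" for n
  proof -
    obtain w where "w \<in> C n" using ne by blast
    then show ?thesis using a_low bd by (meson order_trans)
  qed
  have "incseq a" using a_mono by (simp add: incseq_def)
  then obtain A where aA: "a \<longlonglongrightarrow> A" "\<And>n. a n \<le> A"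
    using incseq_convergent[of a R] a_R by blast
  define d where "d n = 1/(real n + 1)" for n :: nat
  have d_pos: "d n > 0" for n unfolding d_def by simp
  have "\<exists>w. w \<in> C n \<and> norm w < a n + d n" for n
  proof -
    have "a n < a n + d n" using d_pos[of n] by simp
    then have i: "Inf (norm ` C n) < a n + d n" using a_def[of n] by linarith
    have "norm ` C n \<noteq> {}" using ne[of n] by simp
    from cInf_lessD[OF this i] have "\<exists>x\<in>norm ` C n. x < a n + d n" .
    then obtain y where y: "y \<in> C n" "norm y < a n + d n" by auto
    show ?thesis by (intro exI[of _ y] conjI y(1)) (use y(2) in linarith)
  qed
  then have "\<forall>n. \<exists>w. w \<in> C n \<and> norm w < a n + d n" by blast
  then obtain w where w0: "\<forall>n. w n \<in> C n \<and> norm (w n) < a n + d n"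
    using choice[of "\<lambda>n w. w \<in> C n \<and> norm w < a n + d n"] by blast
  then have w: "\<And>n. w n \<in> C n" "\<And>n. norm (w n) < a n + d n" by auto
  define b where "b n = 4 * ((A + d n)\<^sup>2 - (a n)\<^sup>2)" for n :: nat
  have b_lim: "b \<longlonglongrightarrow> 0"
  proof -
    have dlim: "d \<longlonglongrightarrow> 0"
    proof -
      have "d = (\<lambda>n. inverse (real n + 1))" by (simp add: d_def fun_eq_iff inverse_eq_divide)
      moreover have "(\<lambda>n. inverse (real n + 1)) = (\<lambda>n. inverse (real (Suc n)))" by (simp add: add.commute)
      ultimately show ?thesis using LIMSEQ_inverse_real_of_nat by metis
    qed
    have "b \<longlonglongrightarrow> 4 * ((A + 0)\<^sup>2 - A\<^sup>2)"
      unfolding b_def by (intro tendsto_mult tendsto_const tendsto_diff tendsto_power tendsto_add aA(1) dlim)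
    then show ?thesis by simp
  qed
  have key: "(norm (w n - w m))\<^sup>2 \<le> b n" if nm: "n \<le> m" for n m
  proof -
    have "w m \<in> C n" using nest[OF nm] w(1) by blast
    then have "(1/2) *\<^sub>R (w n + w m) \<in> C n" using mid w(1) by blast
    then have "a n \<le> norm ((1/2) *\<^sub>R (w n + w m))" by (rule a_low)
    then have "2 * a n \<le> norm (w n + w m)" by simp
    then have h1: "4 * (a n)\<^sup>2 \<le> (norm (w n + w m))\<^sup>2"
    proof -
      have "(2 * a n)\<^sup>2 \<le> (norm (w n + w m))\<^sup>2"
        using \<open>2 * a n \<le> norm (w n + w m)\<close> a_nn[of n] by (intro power_mono) auto
      then show ?thesis by (simp add: power_mult_distrib)
    qed
    have h2: "norm (w n) \<le> A + d n" using w(2)[of n] aA(2)[of n] by linarith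
    have "d m \<le> d n" using nm unfolding d_def by (simp add: frac_le)
    then have h3: "norm (w m) \<le> A + d n" using w(2)[of m] aA(2)[of m] by linarith
    have h2': "(norm (w n))\<^sup>2 \<le> (A + d n)\<^sup>2" using h2 by (intro power_mono) auto
    have h3': "(norm (w m))\<^sup>2 \<le> (A + d n)\<^sup>2" using h3 by (intro power_mono) auto
    have "(norm (w n - w m))\<^sup>2 = 2 * (norm (w n))\<^sup>2 + 2 * (norm (w m))\<^sup>2 - (norm (w n + w m))\<^sup>2"
      using parallelogram_norm[of "w n" "w m"] by linarith
    moreover have "\<And>P Q R S T U::real. P = 2*Q + 2*R - S \<Longrightarrow> 4*T \<le> S \<Longrightarrow> Q \<le> U \<Longrightarrow> R \<le> U \<Longrightarrow> P \<le> 4*(U - T)"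
      by (simp add: right_diff_distrib)
    ultimately show ?thesis using h1 h2' h3' unfolding b_def by blast
  qed
  have "Cauchy w"
  proof (rule CauchyI)
    fix e :: real assume e: "0 < e"
    then have "e\<^sup>2 > 0" by simp
    then obtain M where M: "\<And>n. n \<ge> M \<Longrightarrow> b n < e\<^sup>2"
      using b_lim by (metis (no_types, lifting) eventually_sequentially order_tendstoD(2))
    have "norm (w m - w n) < e" if "m \<ge> M" "n \<ge> M" for m n
    proof -
      have "(norm (w m - w n))\<^sup>2 < e\<^sup>2"
      proof (cases "m \<le> n")
        case True then show ?thesis using key[OF True] M[OF that(1)] by linarith
      next
        case False
        then have "(norm (w n - w m))\<^sup>2 < e\<^sup>2" using key[of n m] M[OF that(2)] by linarith
        then show ?thesis by (simp add: norm_minus_commute)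
      qed
      then show ?thesis using e by (metis power2_less_imp_less less_imp_le)
    qed
    then show "\<exists>M. \<forall>m\<ge>M. \<forall>n\<ge>M. norm (w m - w n) < e" by blast
  qed
  then obtain m where "w \<longlonglongrightarrow> m" using Cauchy_convergent_iff convergent_def by blast
  then show ?thesis using w(1) by blast
qed

lemma weak_core:
  fixes N :: "'v::{real_inner,complete_space} \<Rightarrow> real" and x :: "nat \<Rightarrow> 'v"
  assumes Nnn: "\<And>a. N a \<ge> 0"
    and Npar: "\<And>a b. N (a+b) + N (a-b) = 2*N a + 2*N b"
    and Nsc: "\<And>c a. N (c *\<^sub>R a) = c\<^sup>2 * N a"
    and Nbd: "\<And>a. N a \<le> K * (norm a)\<^sup>2"
    and Ninj: "\<And>a. N a = 0 \<Longrightarrow> a = 0"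
    and xb: "\<And>k. norm (x k) \<le> R"
    and Nx: "(\<lambda>k. N (x k)) \<longlonglongrightarrow> 0"
    and dp: "\<delta> > 0"
    and fr: "frequently (\<lambda>k. \<delta> \<le> inner (x k) z) sequentially"
  shows False
proof -
  define d where "d n = 1/(real n + 1)" for n :: nat
  have d_pos: "d n > 0" for n unfolding d_def by simp
  have dlim: "d \<longlonglongrightarrow> 0"
  proof -
    have "d = (\<lambda>n. inverse (real n + 1))" by (simp add: d_def fun_eq_iff inverse_eq_divide)
    moreover have "(\<lambda>n. inverse (real n + 1)) = (\<lambda>n. inverse (real (Suc n)))" by (simp add: add.commute)
    ultimately show ?thesis using LIMSEQ_inverse_real_of_nat by metis
  qed
  define C where "C n = {w. \<delta> \<le> inner w z \<and> norm w \<le> R \<and> N w \<le> d n}" for n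
  have ne: "C n \<noteq> {}" for n
  proof -
    have "eventually (\<lambda>k. N (x k) < d n) sequentially"
      using Nx d_pos[of n] by (rule order_tendstoD(2))
    from frequently_eventually_frequently[OF fr this]
    obtain k where "\<delta> \<le> inner (x k) z" "N (x k) < d n" using frequently_ex by blast
    then have "x k \<in> C n" using xb[of k] by (simp add: C_def)
    then show ?thesis by blast
  qed
  have nest: "C m \<subseteq> C n" if "n \<le> m" for n m
  proof -
    have "d m \<le> d n" using that unfolding d_def by (simp add: frac_le)
    then show ?thesis unfolding C_def by auto
  qed
  have mid: "(1/2) *\<^sub>R (a + b) \<in> C n" if a: "a \<in> C n" and b: "b \<in> C n" for n a b
  proof -
    have i: "inner ((1/2) *\<^sub>R (a + b)) z = (inner a z + inner b z) / 2"
      by (simp add: inner_add_left)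
    have nr: "norm ((1/2) *\<^sub>R (a + b)) \<le> (norm a + norm b) / 2"
      using norm_triangle_ineq[of a b] by simp
    have "N ((1/2) *\<^sub>R (a + b)) = (1/4) * N (a + b)"
      using Nsc[of "1/2" "a+b"] by (simp add: power2_eq_square)
    also have "N (a + b) \<le> 2 * N a + 2 * N b" using Npar[of a b] Nnn[of "a-b"] by linarith
    finally have "N ((1/2) *\<^sub>R (a + b)) \<le> (N a + N b) / 2" by simp
    then show ?thesis using a b i nr unfolding C_def by auto
  qed
  have bd: "norm w \<le> R" if "w \<in> C n" for n w using that by (simp add: C_def)
  obtain w m where w: "\<And>n. w n \<in> C n" and wm: "w \<longlonglongrightarrow> m"
    using hilbert_nested_cauchy[of C R] ne nest mid bd by blast
  have "(\<lambda>n. inner (w n) z) \<longlonglongrightarrow> inner m z"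
    using wm by (intro tendsto_intros)
  moreover have "\<delta> \<le> inner (w n) z" for n using w[of n] by (simp add: C_def)
  ultimately have mz: "\<delta> \<le> inner m z"
    by (meson LIMSEQ_le_const)
  have Nle: "N m \<le> 2 * K * (norm (m - w n))\<^sup>2 + 2 * d n" for n
  proof -
    have "N m + N (m - 2 *\<^sub>R w n) = 2 * N (m - w n) + 2 * N (w n)"
      using Npar[of "m - w n" "w n"] by (simp add: algebra_simps scaleR_2)
    moreover have "N (w n) \<le> d n" using w[of n] by (simp add: C_def)
    moreover have "N (m - w n) \<le> K * (norm (m - w n))\<^sup>2" by (rule Nbd)
    ultimately show ?thesis using Nnn[of "m - 2 *\<^sub>R w n"] by linarith
  qed
  have "(\<lambda>n. 2 * K * (norm (m - w n))\<^sup>2 + 2 * d n) \<longlonglongrightarrow> 2 * K * (norm (m - m))\<^sup>2 + 2 * 0"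
    using wm dlim by (intro tendsto_intros)
  then have "(\<lambda>n. 2 * K * (norm (m - w n))\<^sup>2 + 2 * d n) \<longlonglongrightarrow> 0" by simp
  then have "N m \<le> 0" using Nle by (meson LIMSEQ_le_const)
  then have "N m = 0" using Nnn[of m] by linarith
  then have "m = 0" by (rule Ninj)
  then show False using mz dp by simp
qed

lemma weak_from_form:
  fixes N :: "'v::{real_inner,complete_space} \<Rightarrow> real" and x :: "nat \<Rightarrow> 'v"
  assumes Nnn: "\<And>a. N a \<ge> 0"
    and Npar: "\<And>a b. N (a+b) + N (a-b) = 2*N a + 2*N b"
    and Nsc: "\<And>c a. N (c *\<^sub>R a) = c\<^sup>2 * N a"
    and Nbd: "\<And>a. N a \<le> K * (norm a)\<^sup>2"
    and Ninj: "\<And>a. N a = 0 \<Longrightarrow> a = 0"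
    and xb: "\<And>k. norm (x k) \<le> R"
    and Nx: "(\<lambda>k. N (x k)) \<longlonglongrightarrow> 0"
  shows "(\<lambda>k. inner (x k) z) \<longlonglongrightarrow> 0"
proof (rule ccontr)
  assume "\<not> ?thesis"
  then obtain e where e: "e > 0" and fr0: "\<not> eventually (\<lambda>k. dist (inner (x k) z) 0 < e) sequentially"
    unfolding tendsto_iff by blast
  then have "frequently (\<lambda>k. e \<le> \<bar>inner (x k) z\<bar>) sequentially"
    by (simp add: not_eventually not_less)
  then have "frequently (\<lambda>k. e \<le> inner (x k) z \<or> e \<le> inner (x k) (-z)) sequentially"
    by (rule frequently_elim1) (auto simp: abs_if split: if_splits)
  then consider "frequently (\<lambda>k. e \<le> inner (x k) z) sequentially"
    | "frequently (\<lambda>k. e \<le> inner (x k) (-z)) sequentially"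
    by (auto simp: frequently_disj_iff)
  then show False
  proof cases
    case 1 show False by (rule weak_core[OF Nnn Npar Nsc Nbd Ninj xb Nx e 1])
  next
    case 2 show False by (rule weak_core[OF Nnn Npar Nsc Nbd Ninj xb Nx e 2])
  qed
qed

definition Qf :: "'a::euclidean_space set \<Rightarrow> ('v \<Rightarrow> 'a \<Rightarrow> real) \<Rightarrow> 'v \<Rightarrow> real" where
  "Qf \<Omega> emb v = integral\<^sup>L (lebesgue_on \<Omega>) (\<lambda>x. (emb v x)\<^sup>2)"

locale setting =
  fixes \<Omega> :: "'a::euclidean_space set" and emb :: "'v::{real_inner,complete_space} \<Rightarrow> 'a \<Rightarrow> real"
  assumes dom: "lipschitz_domain \<Omega>" and cde: "compact_dense_embedding \<Omega> emb"
begin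

abbreviation "M \<equiv> lebesgue_on \<Omega>"
abbreviation "Q \<equiv> Qf \<Omega> emb"

lemma fin: "finite_measure M"
proof -
  have "open \<Omega>" "bounded \<Omega>" using dom by (auto simp: lipschitz_domain_def)
  then have "\<Omega> \<in> sets lebesgue" by simp
  then have "\<Omega> \<in> lmeasurable" using \<open>bounded \<Omega>\<close> by (intro bounded_set_imp_lmeasurable)
  then show ?thesis by (rule finite_measure_lebesgue_on)
qed

lemma int_const[simp, intro]: "integrable M (\<lambda>x. c::real)"
  using finite_measure.integrable_const[OF fin] .

lemma L2e: "L2 \<Omega> (emb v)" using cde by (simp add: compact_dense_embedding_def)

lemma meas[measurable]: "emb v \<in> borel_measurable M" using L2e by (simp add: L2_def)

lemma int_sq[simp, intro]: "integrable M (\<lambda>x. (emb v x)\<^sup>2)" using L2e by (simp add: L2_def)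

lemma lin: "emb (a *\<^sub>R u + b *\<^sub>R v) = (\<lambda>x. a * emb u x + b * emb v x)"
  using cde by (simp add: compact_dense_embedding_def)

lemma e_add: "emb (u + v) x = emb u x + emb v x"
  using lin[of 1 u 1 v] by (simp add: fun_eq_iff)

lemma e_scale: "emb (c *\<^sub>R u) x = c * emb u x"
  using lin[of c u 0 u] by (simp add: fun_eq_iff)

lemma e_diff: "emb (u - v) x = emb u x - emb v x"
  using lin[of 1 u "-1" v] by (simp add: fun_eq_iff)

lemma e_zero: "emb 0 x = 0"
  using e_scale[of 0 0 x] by simp

lemma e_minus: "emb (- u) x = - emb u x"
  using e_scale[of "-1" u x] by simp

lemma int_abs[simp, intro]: "integrable M (\<lambda>x. \<bar>emb v x\<bar>)"
proof (rule Bochner_Integration.integrable_bound[where f="\<lambda>x. 1 + (emb v x)\<^sup>2"])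
  show "integrable M (\<lambda>x. 1 + (emb v x)\<^sup>2)" by (intro Bochner_Integration.integrable_add int_const int_sq)
  show "(\<lambda>x. \<bar>emb v x\<bar>) \<in> borel_measurable M" by measurable
  have "\<bar>t\<bar> \<le> 1 + t\<^sup>2" for t :: real
  proof (cases "\<bar>t\<bar> \<le> 1")
    case True then show ?thesis by (simp add: add_increasing2)
  next
    case False then have "\<bar>t\<bar> * 1 \<le> \<bar>t\<bar> * \<bar>t\<bar>" by (intro mult_left_mono) auto
    also have "\<bar>t\<bar> * \<bar>t\<bar> = t\<^sup>2" by (simp add: power2_eq_square abs_mult_self_eq)
    finally show ?thesis by simp
  qed
  then show "AE x in M. norm \<bar>emb v x\<bar> \<le> norm (1 + (emb v x)\<^sup>2)" by auto
qed

lemma int_e[simp, intro]: "integrable M (emb v)"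
  using int_abs[of v] by (rule integrable_abs_cancel) simp

lemma prod_eq: "emb a x * emb b x = ((emb (a + b) x)\<^sup>2 - (emb (a - b) x)\<^sup>2) / 4"
  by (simp add: e_add e_diff power2_eq_square algebra_simps)

lemma int_prod[simp, intro]: "integrable M (\<lambda>x. emb a x * emb b x)"
  unfolding prod_eq by (intro integrable_divide integrable_diff) auto

lemma Q_nn: "Q v \<ge> 0"
  unfolding Qf_def by (intro integral_nonneg_AE) auto

lemma Q_par: "Q (a + b) + Q (a - b) = 2 * Q a + 2 * Q b"
proof -
  have "Q (a + b) + Q (a - b) = integral\<^sup>L M (\<lambda>x. (emb (a+b) x)\<^sup>2 + (emb (a-b) x)\<^sup>2)"
    unfolding Qf_def by (subst Bochner_Integration.integral_add) auto
  also have "\<dots> = integral\<^sup>L M (\<lambda>x. 2 * (emb a x)\<^sup>2 + 2 * (emb b x)\<^sup>2)"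
    by (rule Bochner_Integration.integral_cong) (auto simp: e_add e_diff power2_eq_square algebra_simps)
  also have "\<dots> = 2 * Q a + 2 * Q b"
    unfolding Qf_def by (subst Bochner_Integration.integral_add) auto
  finally show ?thesis .
qed

lemma Q_sc: "Q (c *\<^sub>R a) = c\<^sup>2 * Q a"
proof -
  have "Q (c *\<^sub>R a) = integral\<^sup>L M (\<lambda>x. c\<^sup>2 * (emb a x)\<^sup>2)"
    unfolding Qf_def by (rule Bochner_Integration.integral_cong) (auto simp: e_scale power_mult_distrib)
  then show ?thesis unfolding Qf_def by simp
qed

lemma L2n: "L2_norm \<Omega> (emb v) = sqrt (Q v)" by (simp add: L2_norm_def Qf_def)

lemma L2n_diff: "(L2_norm \<Omega> (\<lambda>x. emb u x - emb v x))\<^sup>2 = Q (u - v)"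
proof -
  have "(\<lambda>x. emb u x - emb v x) = emb (u - v)" by (simp add: e_diff fun_eq_iff)
  then show ?thesis using Q_nn[of "u - v"] by (simp add: L2n)
qed

definition "Cemb = (SOME C. \<forall>v. L2_norm \<Omega> (emb v) \<le> C * norm v)"

lemma Cemb: "L2_norm \<Omega> (emb v) \<le> Cemb * norm v"
proof -
  have "\<exists>C. \<forall>v. L2_norm \<Omega> (emb v) \<le> C * norm v" using cde by (simp add: compact_dense_embedding_def)
  then show ?thesis unfolding Cemb_def by (rule someI_ex[where P="\<lambda>C. \<forall>v. L2_norm \<Omega> (emb v) \<le> C * norm v", rule_format])
qed

abbreviation "K \<equiv> Cemb\<^sup>2"

lemma Q_bd: "Q v \<le> K * (norm v)\<^sup>2"
proof -
  have "sqrt (Q v) \<le> Cemb * norm v" using Cemb[of v] by (simp add: L2n)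
  then have "(sqrt (Q v))\<^sup>2 \<le> (Cemb * norm v)\<^sup>2" using Q_nn[of v] by (intro power_mono) auto
  then show ?thesis using Q_nn[of v] by (simp add: power_mult_distrib)
qed

lemma Q_inj: "Q v = 0 \<Longrightarrow> v = 0"
proof -
  assume "Q v = 0"
  then have "AE x in M. (emb v x)\<^sup>2 = 0"
    unfolding Qf_def by (subst integral_nonneg_eq_0_iff_AE[symmetric]) auto
  then have "AE x in M. emb v x = 0" by simp
  then show "v = 0" using cde by (simp add: compact_dense_embedding_def)
qed

end

lemma young_tangent:
  fixes p \<eta> t :: real
  assumes p: "0 < p" "p < 1" and e: "0 < \<eta>" and t: "0 \<le> t"
  shows "t powr (p/2) \<le> p/2 * t / \<eta> powr (2 - p) + (1 - p/2) * \<eta> powr p"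
proof (cases "t = 0")
  case True then show ?thesis using p e by simp
next
  case False
  hence tp: "t > 0" using t by simp
  define a where "a = t / \<eta> powr (2 - p)"
  define b where "b = \<eta> powr p"
  have "a powr (p/2) * b powr (1 - p/2) \<le> (p/2)*a + (1-p/2)*b"
    by (rule Youngs_inequality_0) (use p e tp in \<open>auto simp: a_def b_def\<close>)
  moreover have "a powr (p/2) * b powr (1 - p/2) = t powr (p/2)"
  proof -
    have 1: "a powr (p/2) = t powr (p/2) / \<eta> powr ((2-p)*(p/2))"
      unfolding a_def using e tp by (simp add: powr_divide powr_powr)
    have 2: "b powr (1 - p/2) = \<eta> powr ((2-p)*(p/2))"
    proof -
      have "b powr (1 - p/2) = \<eta> powr (p*(1-p/2))" unfolding b_def by (simp add: powr_powr)
      moreover have "p*(1-p/2) = (2-p)*(p/2)" by (simp add: field_simps)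
      ultimately show ?thesis by simp
    qed
    show ?thesis unfolding 1 2 using e by simp
  qed
  ultimately show ?thesis by (simp add: a_def b_def)
qed

lemma psi0: "0 \<le> (t::real) \<Longrightarrow> psi p 0 t = t powr (p/2)"
  by (simp add: psi_def)

lemma sq_powr: "((s::real)\<^sup>2) powr (p/2) = \<bar>s\<bar> powr p"
proof -
  have e1: "s\<^sup>2 = \<bar>s\<bar> powr 2"
  proof (cases "s = 0")
    case False then show ?thesis by (simp add: powr_realpow)
  qed simp
  have "2 * (p/2) = p" by simp
  then show ?thesis unfolding e1 by (simp only: powr_powr)
qed

lemma subadd_powr:
  fixes p a b :: real
  assumes p: "0 < p" "p \<le> 1" and a: "0 \<le> a" and b: "0 \<le> b"
  shows "(a + b) powr p \<le> a powr p + b powr p"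
proof (cases "a + b = 0")
  case True then show ?thesis using a b by simp
next
  case False
  then have s: "a + b > 0" using a b by simp
  have fa: "a / (a+b) \<le> (a/(a+b)) powr p"
    using powr_mono'[of p 1 "a/(a+b)"] p a b s by simp
  have fb: "b / (a+b) \<le> (b/(a+b)) powr p"
    using powr_mono'[of p 1 "b/(a+b)"] p a b s by simp
  have "1 = a/(a+b) + b/(a+b)" using s by (simp add: add_divide_distrib[symmetric])
  also have "\<dots> \<le> (a/(a+b)) powr p + (b/(a+b)) powr p" using fa fb by simp
  also have "\<dots> = (a powr p + b powr p) / (a+b) powr p"
    using a b s by (simp add: powr_divide add_divide_distrib)
  finally have "1 \<le> (a powr p + b powr p) / (a+b) powr p" .
  moreover have "(a+b) powr p > 0" using s by simp
  ultimately show ?thesis by (simp add: le_divide_eq)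
qed

lemma abs_powr_sub:
  fixes p s r :: real
  assumes p: "0 < p" "p \<le> 1"
  shows "\<bar>s\<bar> powr p \<le> \<bar>s - r\<bar> powr p + \<bar>r\<bar> powr p"
proof -
  have "\<bar>s\<bar> powr p \<le> (\<bar>s - r\<bar> + \<bar>r\<bar>) powr p"
    using p by (intro powr_mono2) auto
  also have "\<dots> \<le> \<bar>s - r\<bar> powr p + \<bar>r\<bar> powr p"
    using p by (intro subadd_powr) auto
  finally show ?thesis .
qed

lemma psi_nonneg:
  fixes p \<epsilon> t :: real
  assumes p: "0 < p" "p < 1" and e: "0 < \<epsilon>" and t: "0 \<le> t"
  shows "0 \<le> psi p \<epsilon> t"
  using psi_lower[OF p e t] by (meson order_trans powr_ge_zero)

lemma psi_at0: "0 < (\<epsilon>::real) \<Longrightarrow> psi p \<epsilon> 0 = (1 - p/2) * \<epsilon> powr p"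
  by (simp add: psi_def)

context setting begin

lemma int_psi:
  assumes p: "0 < p" "p < 1" and e: "0 < \<epsilon>"
  shows "integrable M (\<lambda>x. psi p \<epsilon> ((emb u x)\<^sup>2))"
proof (rule Bochner_Integration.integrable_bound[where f="\<lambda>x. (1 - p/2) * \<epsilon> powr p + p * \<epsilon> powr (p - 1) * \<bar>emb u x\<bar>"])
  show "integrable M (\<lambda>x. (1 - p/2) * \<epsilon> powr p + p * \<epsilon> powr (p - 1) * \<bar>emb u x\<bar>)"
    by (intro Bochner_Integration.integrable_add int_const integrable_mult_right int_abs)
  show "(\<lambda>x. psi p \<epsilon> ((emb u x)\<^sup>2)) \<in> borel_measurable M"
    using psi_meas[of p \<epsilon>] by measurable
  have "norm (psi p \<epsilon> ((emb u x)\<^sup>2)) \<le> norm ((1 - p/2) * \<epsilon> powr p + p * \<epsilon> powr (p - 1) * \<bar>emb u x\<bar>)" for x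
  proof -
    have nn: "0 \<le> psi p \<epsilon> ((emb u x)\<^sup>2)" using psi_nonneg[OF p e] by simp
    have "psi p \<epsilon> ((emb u x)\<^sup>2) - psi p \<epsilon> (0\<^sup>2) \<le> p * \<epsilon> powr (p - 1) * \<bar>emb u x - 0\<bar>"
      using h_lip[OF p e, of "emb u x" 0] by linarith
    then have "psi p \<epsilon> ((emb u x)\<^sup>2) \<le> (1 - p/2) * \<epsilon> powr p + p * \<epsilon> powr (p - 1) * \<bar>emb u x\<bar>"
      using psi_at0[OF e, of p] by simp
    then show ?thesis using nn by simp
  qed
  then show "AE x in M. norm (psi p \<epsilon> ((emb u x)\<^sup>2)) \<le> norm ((1 - p/2) * \<epsilon> powr p + p * \<epsilon> powr (p - 1) * \<bar>emb u x\<bar>)"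
    by simp
qed

lemma int_pow:
  assumes p: "0 < p" "p < 1"
  shows "integrable M (\<lambda>x. \<bar>emb u x\<bar> powr p)"
proof (rule Bochner_Integration.integrable_bound[where f="\<lambda>x. psi p 1 ((emb u x)\<^sup>2)"])
  show "integrable M (\<lambda>x. psi p 1 ((emb u x)\<^sup>2))" by (rule int_psi[OF p]) simp
  show "(\<lambda>x. \<bar>emb u x\<bar> powr p) \<in> borel_measurable M" by measurable
  have "norm (\<bar>emb u x\<bar> powr p) \<le> norm (psi p 1 ((emb u x)\<^sup>2))" for x
  proof -
    have "\<bar>emb u x\<bar> powr p \<le> psi p 1 ((emb u x)\<^sup>2)"
      using psi_lower[OF p, of 1 "(emb u x)\<^sup>2"] sq_powr by simp
    moreover have "0 \<le> \<bar>emb u x\<bar> powr p" by simp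
    ultimately show ?thesis by simp
  qed
  then show "AE x in M. norm (\<bar>emb u x\<bar> powr p) \<le> norm (psi p 1 ((emb u x)\<^sup>2))" by simp
qed

lemma G0_eq: "G \<Omega> emb p 0 u = integral\<^sup>L M (\<lambda>x. \<bar>emb u x\<bar> powr p)"
  unfolding G_def by (rule Bochner_Integration.integral_cong) (simp_all add: psi0 sq_powr)

abbreviation "\<mu> \<equiv> measure M \<Omega>"

lemma G_lo:
  assumes p: "0 < p" "p < 1" and e: "0 < \<epsilon>"
  shows "G \<Omega> emb p 0 u \<le> G \<Omega> emb p \<epsilon> u"
  unfolding G0_eq unfolding G_def
proof (rule integral_mono)
  show "integrable M (\<lambda>x. \<bar>emb u x\<bar> powr p)" by (rule int_pow[OF p])
  show "integrable M (\<lambda>x. psi p \<epsilon> ((emb u x)\<^sup>2))" by (rule int_psi[OF p e])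
  fix x show "\<bar>emb u x\<bar> powr p \<le> psi p \<epsilon> ((emb u x)\<^sup>2)"
    using psi_lower[OF p e, of "(emb u x)\<^sup>2"] sq_powr by simp
qed

lemma G_hi:
  assumes p: "0 < p" "p < 1" and e: "0 < \<epsilon>"
  shows "G \<Omega> emb p \<epsilon> u \<le> G \<Omega> emb p 0 u + (1 - p/2) * \<epsilon> powr p * \<mu>"
proof -
  have "G \<Omega> emb p \<epsilon> u \<le> integral\<^sup>L M (\<lambda>x. \<bar>emb u x\<bar> powr p + (1 - p/2) * \<epsilon> powr p)"
    unfolding G_def
  proof (rule integral_mono)
    show "integrable M (\<lambda>x. psi p \<epsilon> ((emb u x)\<^sup>2))" by (rule int_psi[OF p e])
    show "integrable M (\<lambda>x. \<bar>emb u x\<bar> powr p + (1 - p/2) * \<epsilon> powr p)"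
      by (intro Bochner_Integration.integrable_add int_pow[OF p] int_const)
    fix x show "psi p \<epsilon> ((emb u x)\<^sup>2) \<le> \<bar>emb u x\<bar> powr p + (1 - p/2) * \<epsilon> powr p"
      using psi_upper[OF p e, of "(emb u x)\<^sup>2"] sq_powr by simp
  qed
  also have "\<dots> = G \<Omega> emb p 0 u + (1 - p/2) * \<epsilon> powr p * \<mu>"
    unfolding G0_eq by (subst Bochner_Integration.integral_add) (auto intro: int_pow[OF p])
  finally show ?thesis .
qed

lemma G0_diff:
  assumes p: "0 < p" "p < 1"
  shows "G \<Omega> emb p 0 a - G \<Omega> emb p 0 b \<le> integral\<^sup>L M (\<lambda>x. \<bar>emb (a - b) x\<bar> powr p)"
proof -
  have "G \<Omega> emb p 0 a \<le> integral\<^sup>L M (\<lambda>x. \<bar>emb (a - b) x\<bar> powr p + \<bar>emb b x\<bar> powr p)"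
    unfolding G0_eq
  proof (rule integral_mono)
    show "integrable M (\<lambda>x. \<bar>emb (a - b) x\<bar> powr p + \<bar>emb b x\<bar> powr p)"
      by (intro Bochner_Integration.integrable_add int_pow[OF p])
    fix x show "\<bar>emb a x\<bar> powr p \<le> \<bar>emb (a - b) x\<bar> powr p + \<bar>emb b x\<bar> powr p"
      using abs_powr_sub[of p "emb a x" "emb b x"] p by (simp add: e_diff)
  qed (rule int_pow[OF p])
  also have "\<dots> = integral\<^sup>L M (\<lambda>x. \<bar>emb (a - b) x\<bar> powr p) + G \<Omega> emb p 0 b"
    unfolding G0_eq by (subst Bochner_Integration.integral_add) (auto intro: int_pow[OF p])
  finally show ?thesis by simp
qed

lemma pow_bound:
  assumes p: "0 < p" "p < 1" and e: "0 < \<eta>"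
  shows "integral\<^sup>L M (\<lambda>x. \<bar>emb w x\<bar> powr p) \<le> p/2 * Q w / \<eta> powr (2 - p) + (1 - p/2) * \<eta> powr p * \<mu>"
proof -
  have "integral\<^sup>L M (\<lambda>x. \<bar>emb w x\<bar> powr p) \<le> integral\<^sup>L M (\<lambda>x. (p/2 / \<eta> powr (2 - p)) * (emb w x)\<^sup>2 + (1 - p/2) * \<eta> powr p)"
  proof (rule integral_mono)
    show "integrable M (\<lambda>x. \<bar>emb w x\<bar> powr p)" by (rule int_pow[OF p])
    show "integrable M (\<lambda>x. (p/2 / \<eta> powr (2 - p)) * (emb w x)\<^sup>2 + (1 - p/2) * \<eta> powr p)"
      by (intro Bochner_Integration.integrable_add integrable_mult_right int_sq int_const)
    fix x show "\<bar>emb w x\<bar> powr p \<le> (p/2 / \<eta> powr (2 - p)) * (emb w x)\<^sup>2 + (1 - p/2) * \<eta> powr p"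
      using young_tangent[OF p e, of "(emb w x)\<^sup>2"] sq_powr by simp
  qed
  also have "\<dots> = p/2 * Q w / \<eta> powr (2 - p) + (1 - p/2) * \<eta> powr p * \<mu>"
    unfolding Qf_def by (subst Bochner_Integration.integral_add) auto
  finally show ?thesis .
qed

end

lemma bl_from_quad:
  fixes f :: "'v::real_normed_vector \<Rightarrow> real"
  assumes add: "\<And>x y. f (x + y) = f x + f y"
    and sc: "\<And>r x. f (r *\<^sub>R x) = r * f x"
    and bd: "\<And>x. \<bar>f x\<bar> \<le> A + B * (norm x)\<^sup>2"
  shows "bounded_linear f"
proof (rule bounded_linear_intro[where K="\<bar>A\<bar> + \<bar>B\<bar>"])
  show "f (x + y) = f x + f y" for x y by (rule add)
  show "f (r *\<^sub>R x) = r *\<^sub>R f x" for r x using sc by simp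
  show "norm (f x) \<le> norm x * (\<bar>A\<bar> + \<bar>B\<bar>)" for x
  proof (cases "x = 0")
    case True
    have "f 0 = 0 * f 0" using sc[of 0 0] by simp
    then show ?thesis using True by simp
  next
    case False
    define y where "y = (1 / norm x) *\<^sub>R x"
    have ny: "norm y = 1" using False by (simp add: y_def)
    have "x = norm x *\<^sub>R y" using False by (simp add: y_def)
    then have "f x = norm x * f y" using sc by metis
    moreover have "\<bar>f y\<bar> \<le> \<bar>A\<bar> + \<bar>B\<bar>" using bd[of y] ny by simp
    ultimately show ?thesis by (simp add: abs_mult mult_left_mono)
  qed
qed

lemma seq_quot:
  fixes g :: "real \<Rightarrow> real"
  assumes "(g has_real_derivative D) (at 0)" and X: "\<And>i. X i \<noteq> 0" "X \<longlonglongrightarrow> 0"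
  shows "(\<lambda>i. (g (X i) - g 0) / X i) \<longlonglongrightarrow> D"
proof -
  have "((\<lambda>y. (g y - g 0) / (y - 0)) \<longlongrightarrow> D) (at 0)"
    using assms(1) by (simp add: has_field_derivative_iff)
  then have "((\<lambda>y. (g y - g 0) / (y - 0)) \<circ> X) \<longlonglongrightarrow> D"
    using X unfolding tendsto_at_iff_sequentially by auto
  then show ?thesis by (simp add: comp_def)
qed

lemma deriv_from_seq:
  fixes g :: "real \<Rightarrow> real"
  assumes "\<And>X. (\<And>i. X i \<noteq> 0) \<Longrightarrow> X \<longlonglongrightarrow> 0 \<Longrightarrow> (\<lambda>i. (g (X i) - g 0) / X i) \<longlonglongrightarrow> D"
  shows "(g has_real_derivative D) (at 0)"
proof -
  have "((\<lambda>y. (g y - g 0) / (y - 0)) \<longlongrightarrow> D) (at 0)"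
    unfolding tendsto_at_iff_sequentially
  proof (intro allI impI)
    fix X :: "nat \<Rightarrow> real" assume "\<forall>i. X i \<in> UNIV - {0}" "X \<longlonglongrightarrow> 0"
    then show "((\<lambda>y. (g y - g 0) / (y - 0)) \<circ> X) \<longlonglongrightarrow> D"
      using assms[of X] by (simp add: comp_def)
  qed
  then show ?thesis by (simp add: has_field_derivative_iff)
qed

context setting begin

definition lam :: "real \<Rightarrow> real \<Rightarrow> 'v \<Rightarrow> 'v \<Rightarrow> real" where
  "lam p \<epsilon> u v = integral\<^sup>L M (\<lambda>x. 2 * emb u x * psi' p \<epsilon> ((emb u x)\<^sup>2) * emb v x)"

lemma int_lam:
  assumes p: "0 < p" "p < 1" and e: "0 < \<epsilon>"
  shows "integrable M (\<lambda>x. 2 * emb u x * psi' p \<epsilon> ((emb u x)\<^sup>2) * emb v x)"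
proof (rule Bochner_Integration.integrable_bound[where f="\<lambda>x. p * \<epsilon> powr (p - 1) * \<bar>emb v x\<bar>"])
  show "integrable M (\<lambda>x. p * \<epsilon> powr (p - 1) * \<bar>emb v x\<bar>)"
    by (intro integrable_mult_right int_abs)
  show "(\<lambda>x. 2 * emb u x * psi' p \<epsilon> ((emb u x)\<^sup>2) * emb v x) \<in> borel_measurable M"
    using psi'_meas[of p \<epsilon>] by measurable
  have "norm (2 * emb u x * psi' p \<epsilon> ((emb u x)\<^sup>2) * emb v x) \<le> norm (p * \<epsilon> powr (p - 1) * \<bar>emb v x\<bar>)" for x
  proof -
    have "\<bar>2 * emb u x * psi' p \<epsilon> ((emb u x)\<^sup>2)\<bar> \<le> p * \<epsilon> powr (p - 1)" by (rule h_dbound[OF p e])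
    then have "\<bar>2 * emb u x * psi' p \<epsilon> ((emb u x)\<^sup>2)\<bar> * \<bar>emb v x\<bar> \<le> p * \<epsilon> powr (p - 1) * \<bar>emb v x\<bar>"
      by (rule mult_right_mono) simp
    moreover have "0 \<le> p * \<epsilon> powr (p - 1)" using p by simp
    ultimately show ?thesis using p by (simp add: abs_mult)
  qed
  then show "AE x in M. norm (2 * emb u x * psi' p \<epsilon> ((emb u x)\<^sup>2) * emb v x) \<le> norm (p * \<epsilon> powr (p - 1) * \<bar>emb v x\<bar>)"
    by simp
qed

lemma abs_le_sq: "\<bar>t::real\<bar> \<le> 1 + t\<^sup>2"
proof (cases "\<bar>t\<bar> \<le> 1")
  case True then show ?thesis by (simp add: add_increasing2)
next
  case False then have "\<bar>t\<bar> * 1 \<le> \<bar>t\<bar> * \<bar>t\<bar>" by (intro mult_left_mono) auto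
  also have "\<bar>t\<bar> * \<bar>t\<bar> = t\<^sup>2" by (simp add: power2_eq_square abs_mult_self_eq)
  finally show ?thesis by simp
qed

lemma int_abs_bound: "integral\<^sup>L M (\<lambda>x. \<bar>emb v x\<bar>) \<le> \<mu> + Q v"
proof -
  have "integral\<^sup>L M (\<lambda>x. \<bar>emb v x\<bar>) \<le> integral\<^sup>L M (\<lambda>x. 1 + (emb v x)\<^sup>2)"
    by (rule integral_mono) (auto intro: abs_le_sq)
  also have "\<dots> = \<mu> + Q v" unfolding Qf_def by (subst Bochner_Integration.integral_add) auto
  finally show ?thesis .
qed

lemma lam_bl:
  assumes p: "0 < p" "p < 1" and e: "0 < \<epsilon>"
  shows "bounded_linear (lam p \<epsilon> u)"
proof (rule bl_from_quad[where A="p * \<epsilon> powr (p - 1) * \<mu>" and B="p * \<epsilon> powr (p - 1) * K"])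
  show "lam p \<epsilon> u (x + y) = lam p \<epsilon> u x + lam p \<epsilon> u y" for x y
  proof -
    have "lam p \<epsilon> u (x + y) = integral\<^sup>L M (\<lambda>z. 2 * emb u z * psi' p \<epsilon> ((emb u z)\<^sup>2) * emb x z
        + 2 * emb u z * psi' p \<epsilon> ((emb u z)\<^sup>2) * emb y z)"
      unfolding lam_def by (rule Bochner_Integration.integral_cong) (auto simp: e_add algebra_simps)
    also have "\<dots> = lam p \<epsilon> u x + lam p \<epsilon> u y"
      unfolding lam_def by (rule Bochner_Integration.integral_add[OF int_lam[OF p e] int_lam[OF p e]])
    finally show ?thesis .
  qed
  show "lam p \<epsilon> u (r *\<^sub>R x) = r * lam p \<epsilon> u x" for r x
  proof -
    have "lam p \<epsilon> u (r *\<^sub>R x) = integral\<^sup>L M (\<lambda>y. r * (2 * emb u y * psi' p \<epsilon> ((emb u y)\<^sup>2) * emb x y))"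
      unfolding lam_def by (rule Bochner_Integration.integral_cong) (auto simp: e_scale algebra_simps)
    then show ?thesis unfolding lam_def by simp
  qed
  show "\<bar>lam p \<epsilon> u x\<bar> \<le> p * \<epsilon> powr (p - 1) * \<mu> + p * \<epsilon> powr (p - 1) * K * (norm x)\<^sup>2" for x
  proof -
    have "\<bar>lam p \<epsilon> u x\<bar> \<le> integral\<^sup>L M (\<lambda>y. \<bar>2 * emb u y * psi' p \<epsilon> ((emb u y)\<^sup>2) * emb x y\<bar>)"
      unfolding lam_def by (rule integral_abs_bound[unfolded real_norm_def])
    also have "\<dots> \<le> integral\<^sup>L M (\<lambda>y. p * \<epsilon> powr (p - 1) * \<bar>emb x y\<bar>)"
    proof (rule integral_mono)
      show "integrable M (\<lambda>y. \<bar>2 * emb u y * psi' p \<epsilon> ((emb u y)\<^sup>2) * emb x y\<bar>)"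
        using int_lam[OF p e] by (rule integrable_abs)
      show "integrable M (\<lambda>y. p * \<epsilon> powr (p - 1) * \<bar>emb x y\<bar>)" by (intro integrable_mult_right int_abs)
      fix y
      have "\<bar>2 * emb u y * psi' p \<epsilon> ((emb u y)\<^sup>2)\<bar> \<le> p * \<epsilon> powr (p - 1)" by (rule h_dbound[OF p e])
      then have "\<bar>2 * emb u y * psi' p \<epsilon> ((emb u y)\<^sup>2)\<bar> * \<bar>emb x y\<bar> \<le> p * \<epsilon> powr (p - 1) * \<bar>emb x y\<bar>"
        by (rule mult_right_mono) simp
      then show "\<bar>2 * emb u y * psi' p \<epsilon> ((emb u y)\<^sup>2) * emb x y\<bar> \<le> p * \<epsilon> powr (p - 1) * \<bar>emb x y\<bar>"
        by (simp add: abs_mult)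
    qed
    also have "\<dots> = p * \<epsilon> powr (p - 1) * integral\<^sup>L M (\<lambda>y. \<bar>emb x y\<bar>)" by simp
    also have "\<dots> \<le> p * \<epsilon> powr (p - 1) * (\<mu> + K * (norm x)\<^sup>2)"
    proof (rule mult_left_mono)
      show "integral\<^sup>L M (\<lambda>y. \<bar>emb x y\<bar>) \<le> \<mu> + K * (norm x)\<^sup>2"
        using int_abs_bound[of x] Q_bd[of x] by linarith
      show "0 \<le> p * \<epsilon> powr (p - 1)" using p by simp
    qed
    finally show ?thesis by (simp add: algebra_simps)
  qed
qed

lemma G_deriv:
  assumes p: "0 < p" "p < 1" and e: "0 < \<epsilon>"
  shows "((\<lambda>t. G \<Omega> emb p \<epsilon> (u + t *\<^sub>R v)) has_real_derivative lam p \<epsilon> u v) (at 0)"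
proof (rule deriv_from_seq)
  fix X :: "nat \<Rightarrow> real" assume X: "\<And>i. X i \<noteq> 0" "X \<longlonglongrightarrow> 0"
  define h where "h s = psi p \<epsilon> (s\<^sup>2)" for s
  define s where "s i x = (h (emb u x + X i * emb v x) - h (emb u x)) / X i" for i x
  have Gt: "G \<Omega> emb p \<epsilon> (u + t *\<^sub>R v) = integral\<^sup>L M (\<lambda>x. h (emb u x + t * emb v x))" for t
    unfolding G_def h_def by (simp add: e_add e_scale)
  have quot: "(G \<Omega> emb p \<epsilon> (u + X i *\<^sub>R v) - G \<Omega> emb p \<epsilon> (u + 0 *\<^sub>R v)) / X i = integral\<^sup>L M (s i)" for i
  proof -
    have i1: "integrable M (\<lambda>x. h (emb u x + X i * emb v x))"
    proof -
      have "integrable M (\<lambda>x. psi p \<epsilon> ((emb (u + X i *\<^sub>R v) x)\<^sup>2))" by (rule int_psi[OF p e])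
      then show ?thesis by (simp add: h_def e_add e_scale)
    qed
    have i2: "integrable M (\<lambda>x. h (emb u x))" unfolding h_def by (rule int_psi[OF p e])
    have "(G \<Omega> emb p \<epsilon> (u + X i *\<^sub>R v) - G \<Omega> emb p \<epsilon> (u + 0 *\<^sub>R v))
        = integral\<^sup>L M (\<lambda>x. h (emb u x + X i * emb v x) - h (emb u x))"
      unfolding Gt by (simp add: Bochner_Integration.integral_diff[OF i1 i2])
    then show ?thesis unfolding s_def by simp
  qed
  have "(\<lambda>i. integral\<^sup>L M (s i)) \<longlonglongrightarrow> integral\<^sup>L M (\<lambda>x. 2 * emb u x * psi' p \<epsilon> ((emb u x)\<^sup>2) * emb v x)"
  proof (rule integral_dominated_convergence[where w="\<lambda>x. p * \<epsilon> powr (p - 1) * \<bar>emb v x\<bar>"])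
    show "(\<lambda>x. 2 * emb u x * psi' p \<epsilon> ((emb u x)\<^sup>2) * emb v x) \<in> borel_measurable M"
      using psi'_meas[of p \<epsilon>] by measurable
    show "s i \<in> borel_measurable M" for i
      unfolding s_def h_def using psi_meas[of p \<epsilon>] by measurable
    show "integrable M (\<lambda>x. p * \<epsilon> powr (p - 1) * \<bar>emb v x\<bar>)" by (intro integrable_mult_right int_abs)
    show "AE x in M. (\<lambda>i. s i x) \<longlonglongrightarrow> 2 * emb u x * psi' p \<epsilon> ((emb u x)\<^sup>2) * emb v x"
    proof (intro AE_I2)
      fix x
      have "((\<lambda>t. h (emb u x + t * emb v x)) has_real_derivative (2 * emb u x * psi' p \<epsilon> ((emb u x)\<^sup>2)) * emb v x) (at 0)"
      proof -
        have d1: "(h has_real_derivative 2 * (emb u x + 0 * emb v x) * psi' p \<epsilon> ((emb u x + 0 * emb v x)\<^sup>2)) (at (emb u x + 0 * emb v x))"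
          unfolding h_def by (rule h_deriv[OF e])
        have d2: "((\<lambda>t. emb u x + t * emb v x) has_real_derivative emb v x) (at 0)"
          by (auto intro!: derivative_eq_intros)
        from DERIV_chain2[OF d1 d2] show ?thesis by simp
      qed
      from seq_quot[OF this X] show "(\<lambda>i. s i x) \<longlonglongrightarrow> 2 * emb u x * psi' p \<epsilon> ((emb u x)\<^sup>2) * emb v x"
        unfolding s_def by simp
    qed
    show "AE x in M. norm (s i x) \<le> p * \<epsilon> powr (p - 1) * \<bar>emb v x\<bar>" for i
    proof (intro AE_I2)
      fix x
      have "\<bar>h (emb u x + X i * emb v x) - h (emb u x)\<bar> \<le> p * \<epsilon> powr (p - 1) * \<bar>(emb u x + X i * emb v x) - emb u x\<bar>"
        unfolding h_def by (rule h_lip[OF p e])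
      also have "\<dots> = \<bar>X i\<bar> * (p * \<epsilon> powr (p - 1) * \<bar>emb v x\<bar>)" by (simp add: abs_mult)
      finally have "\<bar>h (emb u x + X i * emb v x) - h (emb u x)\<bar> / \<bar>X i\<bar> \<le> p * \<epsilon> powr (p - 1) * \<bar>emb v x\<bar>"
        using X(1)[of i] by (simp add: divide_le_eq mult.commute)
      then show "norm (s i x) \<le> p * \<epsilon> powr (p - 1) * \<bar>emb v x\<bar>" by (simp add: s_def)
    qed
  qed
  then show "(\<lambda>i. (G \<Omega> emb p \<epsilon> (u + X i *\<^sub>R v) - G \<Omega> emb p \<epsilon> (u + 0 *\<^sub>R v)) / X i) \<longlonglongrightarrow> lam p \<epsilon> u v"
    unfolding quot lam_def .
qed

definition Bf :: "'v \<Rightarrow> 'v \<Rightarrow> real" where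
  "Bf a b = integral\<^sup>L M (\<lambda>x. emb a x * emb b x)"

lemma Q_expand: "Q (d + t *\<^sub>R v) = Q d + 2 * t * Bf d v + t\<^sup>2 * Q v"
proof -
  have "Q (d + t *\<^sub>R v) = integral\<^sup>L M (\<lambda>x. ((emb d x)\<^sup>2 + (2 * t) * (emb d x * emb v x)) + t\<^sup>2 * (emb v x)\<^sup>2)"
    unfolding Qf_def by (rule Bochner_Integration.integral_cong) (auto simp: e_add e_scale power2_eq_square algebra_simps)
  also have "\<dots> = Q d + 2 * t * Bf d v + t\<^sup>2 * Q v"
    unfolding Qf_def Bf_def
    by (subst Bochner_Integration.integral_add; (subst Bochner_Integration.integral_add)?) auto
  finally show ?thesis .
qed

lemma B_quarter: "Bf a b = (Q (a + b) - Q (a - b)) / 4"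
  unfolding Bf_def Qf_def prod_eq
  by (simp add: Bochner_Integration.integral_diff)

lemma B_scale: "Bf (c *\<^sub>R a) b = c * Bf a b" "Bf a (c *\<^sub>R b) = c * Bf a b"
  unfolding Bf_def by (simp_all add: e_scale mult.assoc mult.left_commute)

lemma B_bound1: "\<bar>Bf a b\<bar> \<le> K * ((norm a)\<^sup>2 + (norm b)\<^sup>2) / 2"
proof -
  have "\<bar>Bf a b\<bar> \<le> (Q (a + b) + Q (a - b)) / 4"
    unfolding B_quarter using Q_nn[of "a+b"] Q_nn[of "a-b"] by simp
  also have "\<dots> = (Q a + Q b) / 2" using Q_par[of a b] by simp
  also have "\<dots> \<le> (K * (norm a)\<^sup>2 + K * (norm b)\<^sup>2) / 2" using Q_bd[of a] Q_bd[of b] by simp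
  finally show ?thesis by (simp add: algebra_simps)
qed

lemma B_bound: "\<bar>Bf a b\<bar> \<le> K * norm a * norm b"
proof (cases "a = 0 \<or> b = 0")
  case True
  then show ?thesis by (auto simp: Bf_def e_zero)
next
  case False
  define a' where "a' = (1 / norm a) *\<^sub>R a"
  define b' where "b' = (1 / norm b) *\<^sub>R b"
  have na: "norm a' = 1" "norm b' = 1" using False by (auto simp: a'_def b'_def)
  have "a = norm a *\<^sub>R a'" "b = norm b *\<^sub>R b'" using False by (auto simp: a'_def b'_def)
  then have "Bf a b = norm a * norm b * Bf a' b'" using B_scale by (metis mult.assoc)
  moreover have "\<bar>Bf a' b'\<bar> \<le> K" using B_bound1[of a' b'] na by simp
  moreover have "norm a * norm b * \<bar>Bf a' b'\<bar> \<le> norm a * norm b * K"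
    using \<open>\<bar>Bf a' b'\<bar> \<le> K\<close> by (intro mult_left_mono) auto
  ultimately show ?thesis by (simp add: abs_mult algebra_simps)
qed

end

context setting begin

lemma powint_lim:
  assumes p: "0 < p" "p < 1" and Qw: "(\<lambda>k. Q (w k)) \<longlonglongrightarrow> 0"
  shows "(\<lambda>k. integral\<^sup>L M (\<lambda>x. \<bar>emb (w k) x\<bar> powr p)) \<longlonglongrightarrow> 0"
  unfolding tendsto_iff
proof (intro allI impI)
  fix r :: real assume r: "r > 0"
  define c where "c = (1 - p/2) * \<mu>"
  have c0: "c \<ge> 0" using p by (simp add: c_def)
  define x0 where "x0 = r / (4 * c + 1)"
  have x0: "x0 > 0" using r c0 by (simp add: x0_def)
  define \<eta> where "\<eta> = x0 powr (1/p)"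
  have eta: "\<eta> > 0" using x0 by (simp add: \<eta>_def)
  have etap: "\<eta> powr p = x0"
  proof -
    have "\<eta> powr p = x0 powr (1/p * p)" unfolding \<eta>_def by (simp add: powr_powr)
    also have "1/p * p = 1" using p by simp
    finally show ?thesis using x0 by simp
  qed
  have cx: "c * x0 < r/2"
  proof -
    have "c * x0 = c * r / (4 * c + 1)" by (simp add: x0_def)
    also have "\<dots> < r / 2"
    proof -
      have "0 \<le> c * r" using r c0 by simp
      then have "c * r * 2 < r * (4 * c + 1)" using r by (simp add: algebra_simps)
      then show ?thesis using c0 by (simp add: divide_less_eq)
    qed
    finally show ?thesis .
  qed
  define thr where "thr = r * \<eta> powr (2 - p) / p"
  have thr: "thr > 0" using r eta p by (simp add: thr_def)
  have ev: "eventually (\<lambda>k. Q (w k) < thr) sequentially"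
    using Qw thr by (rule order_tendstoD(2))
  show "eventually (\<lambda>k. dist (integral\<^sup>L M (\<lambda>x. \<bar>emb (w k) x\<bar> powr p)) 0 < r) sequentially"
    using ev
  proof eventually_elim
    case (elim k)
    have nn: "0 \<le> integral\<^sup>L M (\<lambda>x. \<bar>emb (w k) x\<bar> powr p)" by (intro integral_nonneg_AE) auto
    have b: "integral\<^sup>L M (\<lambda>x. \<bar>emb (w k) x\<bar> powr p) \<le> p/2 * Q (w k) / \<eta> powr (2 - p) + (1 - p/2) * \<eta> powr p * \<mu>"
      by (rule pow_bound[OF p eta])
    have ep: "\<eta> powr (2 - p) > 0" using eta by simp
    have "p/2 * Q (w k) / \<eta> powr (2 - p) < p/2 * thr / \<eta> powr (2 - p)"
      using elim p ep by (simp add: divide_strict_right_mono)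
    also have "p/2 * thr / \<eta> powr (2 - p) = r/2" using p ep by (simp add: thr_def)
    finally have b1: "p/2 * Q (w k) / \<eta> powr (2 - p) < r/2" .
    have b2: "(1 - p/2) * \<eta> powr p * \<mu> = c * x0" by (simp add: c_def etap)
    have "integral\<^sup>L M (\<lambda>x. \<bar>emb (w k) x\<bar> powr p) < r" using b b1 b2 cx by linarith
    then show ?case using nn by simp
  qed
qed

end

lemma F_dir:
  fixes F :: "'v::real_normed_vector \<Rightarrow> real"
  assumes "(F has_derivative blinfun_apply D) (at u)"
  shows "((\<lambda>t. F (u + t *\<^sub>R v)) has_real_derivative blinfun_apply D v) (at 0)"
proof -
  have l: "((\<lambda>t::real. u + t *\<^sub>R v) has_derivative (\<lambda>t. t *\<^sub>R v)) (at 0)"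
    by (auto intro!: derivative_eq_intros)
  have "(F has_derivative blinfun_apply D) (at ((\<lambda>t::real. u + t *\<^sub>R v) 0))" using assms by simp
  from has_derivative_compose[OF l this]
  have "((\<lambda>t. F (u + t *\<^sub>R v)) has_derivative (\<lambda>t. blinfun_apply D (t *\<^sub>R v))) (at 0)" .
  moreover have "(\<lambda>t. blinfun_apply D (t *\<^sub>R v)) = (*) (blinfun_apply D v)"
    by (rule ext) (simp add: blinfun.scaleR_right)
  ultimately show ?thesis by (simp add: has_field_derivative_def)
qed

lemma norm_expand:
  fixes u v :: "'v::real_inner"
  shows "(norm (u + t *\<^sub>R v))\<^sup>2 = (norm u)\<^sup>2 + 2 * t * inner u v + t\<^sup>2 * (norm v)\<^sup>2"
  unfolding power2_norm_eq_inner
  by (simp add: inner_add_left inner_add_right inner_commute power2_eq_square algebra_simps)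

lemma poly_deriv: "((\<lambda>t::real. A + 2 * t * B + t\<^sup>2 * C) has_real_derivative 2 * B) (at 0)"
  by (auto intro!: derivative_eq_intros)

lemma first_order:
  fixes phi :: "real \<Rightarrow> real"
  assumes d: "(phi has_real_derivative D) (at 0)" and del: "\<delta> > 0"
    and min: "\<And>t. \<bar>t\<bar> < \<delta> \<Longrightarrow> phi 0 \<le> phi t"
  shows "D = 0"
  using DERIV_local_min[OF d del] min by auto

theorem lemma5p3:
  fixes \<Omega> :: "'a::euclidean_space set"
    and emb :: "'v::{real_inner,complete_space} \<Rightarrow> 'a \<Rightarrow> real"
    and F :: "'v \<Rightarrow> real" and DF :: "'v \<Rightarrow> ('v \<Rightarrow>\<^sub>L real)"
    and \<alpha> \<beta> p \<rho> :: real and ubar :: 'v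
    and \<epsilon> :: "nat \<Rightarrow> real" and u :: "nat \<Rightarrow> 'v"
  assumes dom: "lipschitz_domain \<Omega>"
    and emb: "compact_dense_embedding \<Omega> emb"
    and F_wlsc: "weakly_lsc F" and F_below: "bounded_below_affine F"
    and F_C1: "C1_frechet F DF"
    and \<alpha>: "\<alpha> > 0" and \<beta>: "\<beta> > 0" and p: "0 < p" "p < 1"
    and \<rho>: "\<rho> > 0"
    and loc: "\<forall>v. norm (v - ubar) \<le> \<rho> \<longrightarrow> Phi \<Omega> emb F \<alpha> \<beta> p 0 ubar \<le> Phi \<Omega> emb F \<alpha> \<beta> p 0 v"
    and eps_pos: "\<forall>k. \<epsilon> k > 0" and eps_lim: "\<epsilon> \<longlonglongrightarrow> 0"
    and u_feas: "\<forall>k. norm (u k - ubar) \<le> \<rho>"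
    and u_opt: "\<forall>k v. norm (v - ubar) \<le> \<rho> \<longrightarrow>
        Phi \<Omega> emb F \<alpha> \<beta> p (\<epsilon> k) (u k) + 1/2 * (L2_norm \<Omega> (\<lambda>x. emb (u k) x - emb ubar x))\<^sup>2
        \<le> Phi \<Omega> emb F \<alpha> \<beta> p (\<epsilon> k) v + 1/2 * (L2_norm \<Omega> (\<lambda>x. emb v x - emb ubar x))\<^sup>2"
  shows "\<exists>(Lam :: nat \<Rightarrow> ('v \<Rightarrow>\<^sub>L real)) Lbar.
           (\<forall>k v. blinfun_apply (Lam k) v =
              integral\<^sup>L (lebesgue_on \<Omega>)
                (\<lambda>x. 2 * emb (u k) x * psi' p (\<epsilon> k) ((emb (u k) x)\<^sup>2) * emb v x)) \<and>
           (\<forall>v. \<beta> * blinfun_apply Lbar v = - blinfun_apply (DF ubar) v - \<alpha> * inner ubar v) \<and>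
           Lam \<longlonglongrightarrow> Lbar"
proof -
  interpret S: setting \<Omega> emb using dom emb by unfold_locales
  define Q where "Q = Qf \<Omega> emb"
  define d where "d k = u k - ubar" for k
  define c where "c = 1 - p/2"
  define \<mu> where "\<mu> = measure (lebesgue_on \<Omega>) \<Omega>"
  define G0 where "G0 = G \<Omega> emb p 0"
  define Ge where "Ge k = G \<Omega> emb p (\<epsilon> k)" for k
  have c0: "c \<ge> 0" using p by (simp add: c_def)
  have mu0: "\<mu> \<ge> 0" by (simp add: \<mu>_def)
  have Q0: "Q 0 = 0" using S.Q_sc[of 0 0] by (simp add: Q_def)
  have L2d: "(L2_norm \<Omega> (\<lambda>x. emb w x - emb ubar x))\<^sup>2 = Q (w - ubar)" for w
    using S.L2n_diff[of w ubar] by (simp add: Q_def)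
  have Phi_eq: "Phi \<Omega> emb F \<alpha> \<beta> p e w = F w + \<alpha>/2 * (norm w)\<^sup>2 + \<beta> * G \<Omega> emb p e w" for e w
    by (simp add: Phi_def)
  have opt0: "F (u k) + \<alpha>/2 * (norm (u k))\<^sup>2 + \<beta> * Ge k (u k) + 1/2 * Q (d k)
      \<le> F ubar + \<alpha>/2 * (norm ubar)\<^sup>2 + \<beta> * Ge k ubar" for k
    using u_opt[rule_format, of ubar k] \<rho> L2d[of "u k"] L2d[of ubar] Q0
    by (simp add: Phi_eq Ge_def d_def)
  have loc0: "F ubar + \<alpha>/2 * (norm ubar)\<^sup>2 + \<beta> * G0 ubar \<le> F (u k) + \<alpha>/2 * (norm (u k))\<^sup>2 + \<beta> * G0 (u k)" for k
    using loc[rule_format, of "u k"] u_feas by (simp add: Phi_eq G0_def)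
  have glo: "\<beta> * G0 w \<le> \<beta> * Ge k w" for k w
    using S.G_lo[OF p eps_pos[rule_format, of k], of w] \<beta> by (simp add: G0_def Ge_def)
  have ghi: "\<beta> * Ge k w \<le> \<beta> * G0 w + \<beta> * (c * \<epsilon> k powr p * \<mu>)" for k w
  proof -
    have "Ge k w \<le> G0 w + c * \<epsilon> k powr p * \<mu>"
      using S.G_hi[OF p eps_pos[rule_format, of k], of w] by (simp add: G0_def Ge_def c_def \<mu>_def)
    then show ?thesis using \<beta> by (simp add: distrib_left[symmetric])
  qed
  have Qbd: "Q (d k) \<le> 2 * (\<beta> * (c * \<epsilon> k powr p * \<mu>))" for k
    using opt0[of k] loc0[of k] glo[where k=k and w="u k"] ghi[where k=k and w=ubar] by linarith
  have Qnn: "Q w \<ge> 0" for w using S.Q_nn by (simp add: Q_def)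
  have epsp: "(\<lambda>k. \<epsilon> k powr p) \<longlonglongrightarrow> 0"
    by (rule tendsto_zero_powrI[OF eps_lim tendsto_const]) (use eps_pos p in \<open>auto intro: always_eventually less_imp_le\<close>)
  have Qlim: "(\<lambda>k. Q (d k)) \<longlonglongrightarrow> 0"
  proof (rule tendsto_sandwich[of "\<lambda>_. 0" _ _ "\<lambda>k. 2 * (\<beta> * (c * \<epsilon> k powr p * \<mu>))"])
    show "eventually (\<lambda>k. 0 \<le> Q (d k)) sequentially" using Qnn by simp
    show "eventually (\<lambda>k. Q (d k) \<le> 2 * (\<beta> * (c * \<epsilon> k powr p * \<mu>))) sequentially" using Qbd by simp
    show "(\<lambda>k. 0::real) \<longlonglongrightarrow> 0" by simp
    have "(\<lambda>k. 2 * (\<beta> * (c * \<epsilon> k powr p * \<mu>))) \<longlonglongrightarrow> 2 * (\<beta> * (c * 0 * \<mu>))"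
      by (intro tendsto_intros epsp)
    then show "(\<lambda>k. 2 * (\<beta> * (c * \<epsilon> k powr p * \<mu>))) \<longlonglongrightarrow> 0" by simp
  qed
  have weak: "(\<lambda>k. inner (d k) z) \<longlonglongrightarrow> 0" for z
  proof (rule weak_from_form[where N=Q])
    show "\<And>a. 0 \<le> Q a" by (rule Qnn)
    show "\<And>a b. Q (a + b) + Q (a - b) = 2 * Q a + 2 * Q b" using S.Q_par by (simp add: Q_def)
    show "\<And>c a. Q (c *\<^sub>R a) = c\<^sup>2 * Q a" using S.Q_sc by (simp add: Q_def)
    show "\<And>a. Q a \<le> S.Cemb\<^sup>2 * (norm a)\<^sup>2" using S.Q_bd by (simp add: Q_def)
    show "\<And>a. Q a = 0 \<Longrightarrow> a = 0" using S.Q_inj by (simp add: Q_def)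
    show "\<And>k. norm (d k) \<le> \<rho>" using u_feas by (simp add: d_def)
    show "(\<lambda>k. Q (d k)) \<longlonglongrightarrow> 0" by (rule Qlim)
  qed
  have lsc: "ereal (F ubar) \<le> liminf (\<lambda>n. ereal (F (u n)))"
  proof -
    have "(\<lambda>n. inner (u n) z) \<longlonglongrightarrow> inner ubar z" for z
    proof -
      have "(\<lambda>n. inner (d n) z + inner ubar z) \<longlonglongrightarrow> 0 + inner ubar z"
        by (intro tendsto_add weak tendsto_const)
      then show ?thesis by (simp add: d_def inner_diff_left)
    qed
    then show ?thesis using F_wlsc unfolding weakly_lsc_def by blast
  qed
  define s where "s k = \<beta> * integral\<^sup>L (lebesgue_on \<Omega>) (\<lambda>x. \<bar>emb (ubar - u k) x\<bar> powr p) + \<beta> * (c * \<epsilon> k powr p * \<mu>)" for k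
  have slim: "s \<longlonglongrightarrow> 0"
  proof -
    have "(\<lambda>k. Q (ubar - u k)) \<longlonglongrightarrow> 0"
    proof -
      have "Q (ubar - u k) = Q (d k)" for k
      proof -
        have "ubar - u k = (-1) *\<^sub>R d k" by (simp add: d_def)
        then show ?thesis using S.Q_sc[of "-1" "d k"] by (simp add: Q_def)
      qed
      then show ?thesis using Qlim by simp
    qed
    then have "(\<lambda>k. integral\<^sup>L (lebesgue_on \<Omega>) (\<lambda>x. \<bar>emb (ubar - u k) x\<bar> powr p)) \<longlonglongrightarrow> 0"
      using S.powint_lim[OF p] by (simp add: Q_def)
    then have "s \<longlonglongrightarrow> \<beta> * 0 + \<beta> * (c * 0 * \<mu>)"
      unfolding s_def by (intro tendsto_intros epsp)
    then show ?thesis by simp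
  qed
  have ineq: "F (u k) + \<alpha>/2 * (norm (u k))\<^sup>2 \<le> F ubar + \<alpha>/2 * (norm ubar)\<^sup>2 + s k" for k
  proof -
    have "G0 ubar - G0 (u k) \<le> integral\<^sup>L (lebesgue_on \<Omega>) (\<lambda>x. \<bar>emb (ubar - u k) x\<bar> powr p)"
      using S.G0_diff[OF p, of ubar "u k"] by (simp add: G0_def)
    then have "\<beta> * G0 ubar - \<beta> * G0 (u k) \<le> \<beta> * integral\<^sup>L (lebesgue_on \<Omega>) (\<lambda>x. \<bar>emb (ubar - u k) x\<bar> powr p)"
      using \<beta> by (simp add: right_diff_distrib[symmetric])
    then show ?thesis using opt0[of k] Qnn[of "d k"] glo[where k=k and w="u k"] ghi[where k=k and w=ubar] unfolding s_def by linarith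
  qed
  have dlim: "(\<lambda>k. norm (d k)) \<longlonglongrightarrow> 0"
    unfolding tendsto_iff
  proof (intro allI impI)
    fix r :: real assume r: "r > 0"
    define e' where "e' = r\<^sup>2"
    define e1 where "e1 = e' * \<alpha> / (4 + 2 * \<alpha>)"
    have e'0: "e' > 0" using r by (simp add: e'_def)
    have e10: "e1 > 0" using e'0 \<alpha> by (simp add: e1_def)
    have e1eq: "e1 * (4 + 2 * \<alpha>) = e' * \<alpha>" using \<alpha> by (simp add: e1_def)
    have evA: "eventually (\<lambda>k. F ubar - e1 < F (u k)) sequentially"
    proof -
      have "ereal (F ubar - e1) < liminf (\<lambda>n. ereal (F (u n)))"
      proof -
        have "ereal (F ubar - e1) < ereal (F ubar)" using e10 by simp
        then show ?thesis using lsc by (rule order_less_le_trans)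
      qed
      from less_LiminfD[OF this] show ?thesis by simp
    qed
    have evB: "eventually (\<lambda>k. s k < e1) sequentially" using slim e10 by (rule order_tendstoD(2))
    have evC: "eventually (\<lambda>k. - e1 < inner (d k) ubar) sequentially"
      using weak[of ubar] e10 by (intro order_tendstoD(1)) auto
    show "eventually (\<lambda>k. dist (norm (d k)) 0 < r) sequentially"
      using evA evB evC
    proof eventually_elim
      case (elim k)
      have X: "\<alpha> * ((norm (u k))\<^sup>2 - (norm ubar)\<^sup>2) < 4 * e1"
        using ineq[of k] elim(1) elim(2) by (simp add: algebra_simps)
      have Y: "\<alpha> * inner (d k) ubar > \<alpha> * (- e1)" using elim(3) \<alpha> by (rule mult_strict_left_mono)
      have uk: "u k = ubar + 1 *\<^sub>R d k" by (simp add: d_def)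
      have Z: "(norm (u k))\<^sup>2 = (norm ubar)\<^sup>2 + 2 * inner ubar (d k) + (norm (d k))\<^sup>2"
        using norm_expand[of ubar 1 "d k"] uk by simp
      have "\<alpha> * (norm (d k))\<^sup>2 = \<alpha> * ((norm (u k))\<^sup>2 - (norm ubar)\<^sup>2) - 2 * (\<alpha> * inner (d k) ubar)"
        using Z by (simp add: algebra_simps inner_commute)
      also have "\<dots> < 4 * e1 + 2 * (\<alpha> * e1)" using X Y by simp
      also have "\<dots> = \<alpha> * e'" using e1eq by (simp add: algebra_simps)
      finally have "(norm (d k))\<^sup>2 < e'" using \<alpha> by simp
      then have "norm (d k) < r" using r unfolding e'_def by (metis power2_less_imp_less less_imp_le)
      then show ?case by simp
    qed
  qed
  have uconv: "u \<longlonglongrightarrow> ubar"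
    using dlim by (rule_tac LIM_zero_cancel) (simp add: tendsto_norm_zero_iff d_def)
  have Fd: "(F has_derivative blinfun_apply (DF w)) (at w)" for w
    using F_C1 by (simp add: C1_frechet_def)
  have DFc: "(\<lambda>k. DF (u k)) \<longlonglongrightarrow> DF ubar"
  proof -
    have "continuous_on UNIV DF" using F_C1 by (simp add: C1_frechet_def)
    then show ?thesis using uconv by (rule continuous_on_tendsto_compose) auto
  qed
  have evrho: "eventually (\<lambda>k. norm (d k) < \<rho>) sequentially"
    using dlim \<rho> by (rule order_tendstoD(2))
  have foc: "blinfun_apply (DF (u k)) v + \<alpha> * inner (u k) v + \<beta> * S.lam p (\<epsilon> k) (u k) v + S.Bf (d k) v = 0"
    if dk: "norm (d k) < \<rho>" for k v
  proof -
    have ek: "\<epsilon> k > 0" using eps_pos by simp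
    define phi where "phi t = F (u k + t *\<^sub>R v) + \<alpha>/2 * ((norm (u k))\<^sup>2 + 2 * t * inner (u k) v + t\<^sup>2 * (norm v)\<^sup>2)
        + \<beta> * G \<Omega> emb p (\<epsilon> k) (u k + t *\<^sub>R v) + 1/2 * (Q (d k) + 2 * t * S.Bf (d k) v + t\<^sup>2 * Q v)" for t
    have phi_eq: "phi t = Phi \<Omega> emb F \<alpha> \<beta> p (\<epsilon> k) (u k + t *\<^sub>R v)
        + 1/2 * (L2_norm \<Omega> (\<lambda>x. emb (u k + t *\<^sub>R v) x - emb ubar x))\<^sup>2" for t
    proof -
      have e: "u k + t *\<^sub>R v - ubar = d k + t *\<^sub>R v" by (simp add: d_def)
      have "(L2_norm \<Omega> (\<lambda>x. emb (u k + t *\<^sub>R v) x - emb ubar x))\<^sup>2 = Q (u k + t *\<^sub>R v - ubar)"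
        by (rule L2d)
      also have "\<dots> = Q (d k + t *\<^sub>R v)" by (simp only: e)
      also have "\<dots> = Q (d k) + 2 * t * S.Bf (d k) v + t\<^sup>2 * Q v"
        unfolding Q_def by (rule S.Q_expand)
      finally have "(L2_norm \<Omega> (\<lambda>x. emb (u k + t *\<^sub>R v) x - emb ubar x))\<^sup>2 = Q (d k) + 2 * t * S.Bf (d k) v + t\<^sup>2 * Q v" .
      then show ?thesis unfolding phi_def Phi_eq using norm_expand[of "u k" t v] by simp
    qed
    have deriv: "(phi has_real_derivative (blinfun_apply (DF (u k)) v + \<alpha>/2 * (2 * inner (u k) v)
        + \<beta> * S.lam p (\<epsilon> k) (u k) v + 1/2 * (2 * S.Bf (d k) v))) (at 0)"
    proof -
      have "phi = (\<lambda>t. F (u k + t *\<^sub>R v) + \<alpha>/2 * ((norm (u k))\<^sup>2 + 2 * t * inner (u k) v + t\<^sup>2 * (norm v)\<^sup>2)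
        + \<beta> * G \<Omega> emb p (\<epsilon> k) (u k + t *\<^sub>R v) + 1/2 * (Q (d k) + 2 * t * S.Bf (d k) v + t\<^sup>2 * Q v))"
        by (simp add: phi_def fun_eq_iff)
      then show ?thesis
        by (simp only:) (intro DERIV_add DERIV_cmult F_dir Fd S.G_deriv[OF p ek] poly_deriv)
    qed
    define \<delta> where "\<delta> = (\<rho> - norm (d k)) / (norm v + 1)"
    have del: "\<delta> > 0" unfolding \<delta>_def using dk by (intro divide_pos_pos) (auto intro: add_nonneg_pos)
    have min: "phi 0 \<le> phi t" if t: "\<bar>t\<bar> < \<delta>" for t
    proof -
      have "\<bar>t\<bar> * norm v \<le> \<delta> * norm v" using t by (intro mult_right_mono) auto
      also have "\<delta> * norm v \<le> \<rho> - norm (d k)"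
      proof -
        have "\<delta> * norm v = (\<rho> - norm (d k)) * (norm v / (norm v + 1))" by (simp add: \<delta>_def)
        also have "\<dots> \<le> (\<rho> - norm (d k)) * 1"
        proof (rule mult_left_mono)
          have "norm v \<le> 1 * (norm v + 1)" by simp
          then show "norm v / (norm v + 1) \<le> 1"
          proof -
            have "0 < norm v + 1" by (simp add: add_nonneg_pos)
            then show ?thesis by (simp add: divide_le_eq)
          qed
          show "0 \<le> \<rho> - norm (d k)" using dk by simp
        qed
        finally show ?thesis by simp
      qed
      finally have tv: "\<bar>t\<bar> * norm v \<le> \<rho> - norm (d k)" .
      have "norm (u k + t *\<^sub>R v - ubar) = norm (d k + t *\<^sub>R v)" by (simp add: d_def algebra_simps)
      also have "\<dots> \<le> norm (d k) + \<bar>t\<bar> * norm v" using norm_triangle_ineq[of "d k" "t *\<^sub>R v"] by simp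
      finally have "norm (u k + t *\<^sub>R v - ubar) \<le> \<rho>" using tv by linarith
      from u_opt[rule_format, OF this] show ?thesis unfolding phi_eq by simp
    qed
    have "blinfun_apply (DF (u k)) v + \<alpha>/2 * (2 * inner (u k) v)
        + \<beta> * S.lam p (\<epsilon> k) (u k) v + 1/2 * (2 * S.Bf (d k) v) = 0"
      by (rule first_order[OF deriv del min])
    then show ?thesis by simp
  qed
  have blk: "bounded_linear (S.lam p (\<epsilon> k) (u k))" for k
    using S.lam_bl[OF p] eps_pos by simp
  define Lam where "Lam k = Blinfun (S.lam p (\<epsilon> k) (u k))" for k
  have Lam_ap: "blinfun_apply (Lam k) v = S.lam p (\<epsilon> k) (u k) v" for k v
    unfolding Lam_def using bounded_linear_Blinfun_apply[OF blk] by simp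
  define Lbar where "Lbar = (-1/\<beta>) *\<^sub>R (DF ubar + \<alpha> *\<^sub>R blinfun_inner_left ubar)"
  have Lbar_ap: "blinfun_apply Lbar v = (-1/\<beta>) * (blinfun_apply (DF ubar) v + \<alpha> * inner ubar v)" for v
    by (simp add: Lbar_def inner_commute blinfun.minus_left blinfun.scaleR_left blinfun.add_left)
  have C2: "\<beta> * blinfun_apply Lbar v = - blinfun_apply (DF ubar) v - \<alpha> * inner ubar v" for v
    using \<beta> by (simp add: Lbar_ap)
  have C1: "blinfun_apply (Lam k) v =
              integral\<^sup>L (lebesgue_on \<Omega>)
                (\<lambda>x. 2 * emb (u k) x * psi' p (\<epsilon> k) ((emb (u k) x)\<^sup>2) * emb v x)" for k v
    by (simp add: Lam_ap S.lam_def)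
  define g where "g k = (norm (DF (u k) - DF ubar) + \<alpha> * norm (d k) + S.Cemb\<^sup>2 * norm (d k)) / \<beta>" for k
  have glim: "g \<longlonglongrightarrow> 0"
  proof -
    have "(\<lambda>k. DF (u k) - DF ubar) \<longlonglongrightarrow> 0" using DFc by (rule LIM_zero)
    then have "(\<lambda>k. norm (DF (u k) - DF ubar)) \<longlonglongrightarrow> 0" by (simp add: tendsto_norm_zero_iff)
    then have "(\<lambda>k. norm (DF (u k) - DF ubar) + \<alpha> * norm (d k) + S.Cemb\<^sup>2 * norm (d k)) \<longlonglongrightarrow> 0 + \<alpha> * 0 + S.Cemb\<^sup>2 * 0"
      by (intro tendsto_add tendsto_mult tendsto_const dlim)
    then have "g \<longlonglongrightarrow> (0 + \<alpha> * 0 + S.Cemb\<^sup>2 * 0) / \<beta>"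
      unfolding g_def using \<beta> by (intro tendsto_divide tendsto_const) auto
    then show ?thesis by simp
  qed
  have "(\<lambda>k. Lam k - Lbar) \<longlonglongrightarrow> 0"
  proof (rule Lim_null_comparison[OF _ glim])
    show "eventually (\<lambda>k. norm (Lam k - Lbar) \<le> g k) sequentially"
      using evrho
    proof eventually_elim
      case (elim k)
      show ?case
      proof (rule norm_blinfun_bound)
        show "0 \<le> g k" using \<alpha> \<beta> by (simp add: g_def)
        fix v
        have "\<beta> * blinfun_apply (Lam k - Lbar) v
            = - (blinfun_apply (DF (u k) - DF ubar) v) - \<alpha> * inner (d k) v - S.Bf (d k) v"
          using foc[OF elim, of v] C2[of v] by (simp add: Lam_ap d_def inner_diff_left algebra_simps blinfun.diff_left)
        also have "\<bar>\<dots>\<bar> \<le> norm (DF (u k) - DF ubar) * norm v + \<alpha> * (norm (d k) * norm v) + S.Cemb\<^sup>2 * norm (d k) * norm v"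
        proof -
          have a: "\<bar>blinfun_apply (DF (u k) - DF ubar) v\<bar> \<le> norm (DF (u k) - DF ubar) * norm v"
            using norm_blinfun[of "DF (u k) - DF ubar" v] by simp
          have b: "\<bar>\<alpha> * inner (d k) v\<bar> \<le> \<alpha> * (norm (d k) * norm v)"
            using Cauchy_Schwarz_ineq2[of "d k" v] \<alpha> by (simp add: abs_mult)
          have c: "\<bar>S.Bf (d k) v\<bar> \<le> S.Cemb\<^sup>2 * norm (d k) * norm v" by (rule S.B_bound)
          show ?thesis using a b c by linarith
        qed
        finally have fin: "\<bar>\<beta> * blinfun_apply (Lam k - Lbar) v\<bar> \<le> norm (DF (u k) - DF ubar) * norm v + \<alpha> * (norm (d k) * norm v) + S.Cemb\<^sup>2 * norm (d k) * norm v" .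
        have "\<beta> * (g k * norm v) = norm (DF (u k) - DF ubar) * norm v + \<alpha> * (norm (d k) * norm v) + S.Cemb\<^sup>2 * norm (d k) * norm v"
          using \<beta> by (simp add: g_def field_simps)
        then have "\<bar>\<beta> * blinfun_apply (Lam k - Lbar) v\<bar> \<le> \<beta> * (g k * norm v)" using fin by linarith
        then have "\<beta> * \<bar>blinfun_apply (Lam k - Lbar) v\<bar> \<le> \<beta> * (g k * norm v)" using \<beta> by (simp add: abs_mult)
        then show "norm (blinfun_apply (Lam k - Lbar) v) \<le> g k * norm v" using \<beta> by simp
      qed
    qed
  qed
  then have "Lam \<longlonglongrightarrow> Lbar" by (rule LIM_zero_cancel)
  then show ?thesis using C1 C2 by blast
qed

end
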